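(* Let $a>0$, $m\in\mathbb{N}$, and let $T=(T_k)\in\mathcal{T}$ satisfy $$\exp\left(\int_0^x\log\bigl(1-P_1(T_k(\alpha))\bigr)\,d\alpha\right)+\prod_{i=1}^k\bigl(1-P_2(T_i(x))\bigr)=1\qquad\text{for all }0<x\le a,\ 1\le k\le m.$$ Then any pair of $T$-strategies (one for each player) is an equilibrium situation (saddle point) of the game $G_{am}(P,A)$, i.e. for every consumption function $\alpha$ of Player I and every action-moment vector $\eta$ of Player II, the realized payoffs satisfy $K(\alpha;\eta^T)\le v_m(a)\le K(\alpha^T;\eta)$, where $\alpha^T$ (resp. $\eta^T$) is the play realized by Player I's (resp. Player II's) $T$-strategy against $\eta$ (resp. $\alpha$). The value of the game is $$v_m(a)=A_1-(A_1+A_2)\exp\left(\int_0^a\log\bigl(1-P_1(T_m(\alpha))\bigr)\,d\alpha\right)=(A_1+A_2)\prod_{i=1}^m\bigl(1-P_2(T_i(a))\bigr)-A_2 .$$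
   Context: The game $G_{am}(P,A)$ (noisy fighter-bomber duel). Two players act during $[0,1]$. Player I has an infinitely divisible resource $a>0$; Player II has $m\in\mathbb{Z}_{\ge0}$ indivisible units. Effectiveness functions $P_1,P_2:[0,1]\to[0,1]$ are continuously differentiable, increasing, $P_j(0)=0$, $P_j(1)=1$, $P_j(t)<1$ for $t<1$; $p=1-P_1$, $q=1-P_2$. Profits $A_1,A_2>0$. Player I's consumption function $\alpha(t)$ (remaining resource) is nonincreasing, continuous, piecewise $C^1$ on $(0,1)$, $\alpha(0)=a$; intensity $\xi=-\alpha'$. Player II's consumption function $n(t)$ is a nonincreasing left-continuous step function with $n(0)=m$; its jump points $0\le\eta_m\le\dots\le\eta_1\le1$ are his action moments, $\eta=(\eta_1,\dots,\eta_m)$. If Player II does not act in $[t_1,t_2]$, Player I succeeds there with probability $\varphi(\alpha,t_1,t_2)=1-\exp\bigl(-\int_{t_1}^{t_2}\log(1-P_1(\tau))\,d\alpha(\tau)\bigr)$; a unit used by Player II at time $t$ succeeds with probability $P_2(t)$. The game stops at the first success; the successful player $j$ gets $A_j$ from the other; payoff $0$ if nobody or both succeed simultaneously. A player not having exhausted his resource consumes it by time $1$ so as to succeed with probability $1$. Expected payoff to Player I: for $m=0$, $K=A_1$ if $a>0$, $K=0$ if $a=0$; for $m\ge1$, $K(\alpha;\eta_1,\dots,\eta_m)=A_1\varphi(\alpha,0,\eta_m)-A_2(1-\varphi(\alpha,0,\eta_m))P_2(\eta_m)+(1-P_2(\eta_m))(1-\varphi(\alpha,0,\eta_m))K(\alpha_m;\eta_1,\dots,\eta_{m-1})$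 with $\alpha_m=\alpha(\eta_m)$ on $[0,\eta_m)$ and $\alpha_m=\alpha$ on $[\eta_m,1]$. The duel is noisy: at each moment each player knows both players' current remaining resources $\alpha,n$. A strategy of Player I is a rule $\xi=u(t,\alpha,n)$ giving his consumption intensity; a strategy of Player II is a rule $\eta_n=v(\alpha,n)$ giving his next action moment. The class $\mathcal{T}$: sequences $T=(T_1,T_2,\dots)$ of functions on $[0,\infty)$, each continuous on $[0,\infty)$ and $C^1$ on $(0,\infty)$, with $0<T_k\le1$, $T_k'(x)<0$ and $T_{k+1}(x)<T_k(x)$ for $x>0$, and $T_k(0)=1$. $T$-strategies: with $\alpha,n$ the current remaining resources at time $t$, Player I uses intensity $\xi^T(t)=0$ if $t<T_n(\alpha)$ and $\xi^T(t)=-1/T_n'(\alpha)$ if $t=T_n(\alpha)$; Player II's next action moment is $\eta^T=T_n(\alpha)$. *)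

theory Defs
  imports "HOL-Analysis.Analysis"
begin

definition effectiveness :: "(real \<Rightarrow> real) \<Rightarrow> bool" where
  "effectiveness P \<longleftrightarrow>
     (\<exists>D. continuous_on {0..1} D \<and>
          (\<forall>t\<in>{0..1}. (P has_real_derivative D t) (at t within {0..1}))) \<and>
     strict_mono_on {0..1} P \<and> P 0 = 0 \<and> P 1 = 1 \<and>
     (\<forall>t\<in>{0..1}. 0 \<le> P t \<and> P t \<le> 1) \<and> (\<forall>t\<in>{0..<1}. P t < 1)"

text \<open>The class \<open>\<T>\<close>: the sequence \<open>T 1, T 2, \<dots>\<close> (the value \<open>T 0\<close> is irrelevant).\<close>
definition classT :: "(nat \<Rightarrow> real \<Rightarrow> real) \<Rightarrow> bool" where
  "classT T \<longleftrightarrow> (\<forall>k\<ge>1.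
     continuous_on {0..} (T k) \<and>
     (\<exists>D. continuous_on {0<..} D \<and>
          (\<forall>x>0. (T k has_real_derivative D x) (at x) \<and> D x < 0)) \<and>
     (\<forall>x\<ge>0. 0 < T k x \<and> T k x \<le> 1) \<and>
     (\<forall>x>0. T (Suc k) x < T k x) \<and>
     T k 0 = 1)"

text \<open>Consumption function of Player I (remaining resource) with initial resource a.\<close>
definition consumption_fun :: "real \<Rightarrow> (real \<Rightarrow> real) \<Rightarrow> bool" where
  "consumption_fun a \<alpha> \<longleftrightarrow>
     \<alpha> 0 = a \<and>
     (\<forall>s t. 0 \<le> s \<and> s \<le> t \<and> t \<le> 1 \<longrightarrow> \<alpha> t \<le> \<alpha> s) \<and>
     (\<forall>t\<in>{0..1}. 0 \<le> \<alpha> t) \<and>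
     continuous_on {0..1} \<alpha> \<and>
     \<alpha> piecewise_C1_differentiable_on {0<..<1}"

definition action_moments :: "nat \<Rightarrow> (nat \<Rightarrow> real) \<Rightarrow> bool" where
  "action_moments m \<eta> \<longleftrightarrow>
     (0 < m \<longrightarrow> 0 \<le> \<eta> m \<and> \<eta> 1 \<le> 1) \<and>
     (\<forall>i. 1 \<le> i \<and> i < m \<longrightarrow> \<eta> (Suc i) \<le> \<eta> i)"

definition clamp01 :: "real \<Rightarrow> real" where
  "clamp01 t = max 0 (min 1 t)"

text \<open>The Lebesgue--Stieltjes quantity
  \<open>J = - \<integral>_{t1}^{t2} log(1 - P1 \<tau>) d\<alpha>(\<tau>) = \<integral>_{t1}^{t2} (- log(1 - P1 \<tau>)) d(-\<alpha>)(\<tau>) \<in> [0,\<infinity>]\<close>,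
  and \<open>\<phi>(\<alpha>,t1,t2) = 1 - exp(-J)\<close> (with exp(-\<infinity>) = 0).\<close>
definition phiI :: "(real \<Rightarrow> real) \<Rightarrow> (real \<Rightarrow> real) \<Rightarrow> real \<Rightarrow> real \<Rightarrow> real" where
  "phiI P1 \<alpha> t1 t2 =
     (let J = (\<integral>\<^sup>+ \<tau>\<in>{t1..t2}. ennreal (- ln (1 - P1 \<tau>))
                 \<partial>(interval_measure (\<lambda>t. - \<alpha> (clamp01 t))))
      in 1 - (if J = \<infinity> then 0 else exp (- enn2real J)))"

definition shift_cons :: "(real \<Rightarrow> real) \<Rightarrow> real \<Rightarrow> real \<Rightarrow> real" where
  "shift_cons \<alpha> e = (\<lambda>t. if t < e then \<alpha> e else \<alpha> t)"

primrec Kpay :: "(real \<Rightarrow> real) \<Rightarrow> (real \<Rightarrow> real) \<Rightarrow> real \<Rightarrow> real \<Rightarrow>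
                 (real \<Rightarrow> real) \<Rightarrow> (nat \<Rightarrow> real) \<Rightarrow> nat \<Rightarrow> real" where
  "Kpay P1 P2 A1 A2 \<alpha> \<eta> 0 = (if 0 < \<alpha> 0 then A1 else 0)"
| "Kpay P1 P2 A1 A2 \<alpha> \<eta> (Suc m) =
     (let e = \<eta> (Suc m); \<phi> = phiI P1 \<alpha> 0 e in
       A1 * \<phi> - A2 * (1 - \<phi>) * P2 e
       + (1 - P2 e) * (1 - \<phi>) * Kpay P1 P2 A1 A2 (shift_cons \<alpha> e) \<eta> m)"

text \<open>Player II's T-strategy against a consumption function \<open>\<alpha>\<close>: having n units
  from time s on, he acts at the first moment t \<ge> s at which t \<ge> T_n(\<alpha>(t)).\<close>
definition actT :: "(nat \<Rightarrow> real \<Rightarrow> real) \<Rightarrow> (real \<Rightarrow> real) \<Rightarrow> nat \<Rightarrow> real \<Rightarrow> real" where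
  "actT T \<alpha> n s = Inf {t \<in> {s..1}. T n (\<alpha> t) \<le> t}"

primrec etaT_aux :: "(nat \<Rightarrow> real \<Rightarrow> real) \<Rightarrow> (real \<Rightarrow> real) \<Rightarrow> nat \<Rightarrow> nat \<Rightarrow> real" where
  "etaT_aux T \<alpha> m 0 = 0"
| "etaT_aux T \<alpha> m (Suc j) = actT T \<alpha> (m - j) (etaT_aux T \<alpha> m j)"

text \<open>Realized action moments \<open>\<eta>^T = (\<eta>_1,\<dots>,\<eta>_m)\<close>; \<open>etaT T \<alpha> m n = \<eta>_n\<close>.\<close>
definition etaT :: "(nat \<Rightarrow> real \<Rightarrow> real) \<Rightarrow> (real \<Rightarrow> real) \<Rightarrow> nat \<Rightarrow> nat \<Rightarrow> real" where
  "etaT T \<alpha> m n = etaT_aux T \<alpha> m (Suc m - n)"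

text \<open>Player I's T-strategy with n units of Player II remaining, starting resource c:
  hold while t < T_n(\<alpha>), then move along t = T_n(\<alpha>).\<close>
definition holdT :: "(nat \<Rightarrow> real \<Rightarrow> real) \<Rightarrow> nat \<Rightarrow> real \<Rightarrow> real \<Rightarrow> real" where
  "holdT T n c t = Sup {x \<in> {0..c}. t \<le> T n x}"

text \<open>Resources at the moments of Player II's actions: \<open>cT j\<close> = resource after j actions.\<close>
primrec cT :: "(nat \<Rightarrow> real \<Rightarrow> real) \<Rightarrow> (nat \<Rightarrow> real) \<Rightarrow> nat \<Rightarrow> real \<Rightarrow> nat \<Rightarrow> real" where
  "cT T \<eta> m a 0 = a"
| "cT T \<eta> m a (Suc j) = holdT T (m - j) (cT T \<eta> m a j) (\<eta> (m - j))"

text \<open>Realized consumption function \<open>\<alpha>^T\<close> of Player I against \<open>\<eta>\<close>; n(t) is Player II's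
  (left-continuous) number of remaining units.  After Player II's last action Player I's
  behaviour is irrelevant for the payoff; he then keeps his resource.\<close>
definition alphaT :: "(nat \<Rightarrow> real \<Rightarrow> real) \<Rightarrow> (nat \<Rightarrow> real) \<Rightarrow> nat \<Rightarrow> real \<Rightarrow> real \<Rightarrow> real" where
  "alphaT T \<eta> m a t =
     (let n = card {i \<in> {1..m}. t \<le> \<eta> i} in
      if n = 0 then cT T \<eta> m a m else holdT T n (cT T \<eta> m a (m - n)) t)"

end

theory Submission
  imports Defs
begin


lemma clamp01_cont: "continuous_on UNIV clamp01"
  unfolding clamp01_def by (intro continuous_intros)

lemma clamp01_range: "clamp01 t \<in> {0..1}"
  unfolding clamp01_def by auto

lemma clamp01_id: "t \<in> {0..1} \<Longrightarrow> clamp01 t = t"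
  unfolding clamp01_def by auto

lemma clamp01_mono: "x \<le> y \<Longrightarrow> clamp01 x \<le> clamp01 y"
  unfolding clamp01_def by auto

lemma KEY:
  fixes b :: "real \<Rightarrow> real"
  assumes bc: "continuous_on UNIV b" and bm: "\<And>x y. x \<le> y \<Longrightarrow> b y \<le> b x"
    and s0: "s0 \<le> e"
  shows "emeasure (interval_measure (\<lambda>t. - b t)) ({s0..e} \<inter> {\<tau>. x < b \<tau>})
       = emeasure lborel ({b e..b s0} \<inter> {x<..})"
proof -
  let ?\<mu> = "interval_measure (\<lambda>t. - b t)"
  have Fm: "\<And>x y. x \<le> y \<Longrightarrow> - b x \<le> - b y" using bm by fastforce
  have Fc: "continuous_on UNIV (\<lambda>t. - b t)" using bc by (intro continuous_intros)
  have Icc: "\<And>u v. u \<le> v \<Longrightarrow> emeasure ?\<mu> {u..v} = ennreal (b u - b v)"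
    by (subst emeasure_interval_measure_Icc[OF _ Fm Fc]) auto
  consider "x < b e" | "b s0 \<le> x" | "b e \<le> x" "x < b s0" by linarith
  then show ?thesis
  proof cases
    case 1
    have "{s0..e} \<inter> {\<tau>. x < b \<tau>} = {s0..e}"
      using 1 bm by (auto intro: less_le_trans)
    moreover have "{b e..b s0} \<inter> {x<..} = {b e..b s0}" using 1 by auto
    ultimately show ?thesis using Icc[OF s0] bm[OF s0] by simp
  next
    case 2
    have "{s0..e} \<inter> {\<tau>. x < b \<tau>} = {}"
      using 2 bm by (force)
    moreover have "{b e..b s0} \<inter> {x<..} = {}" using 2 by auto
    ultimately show ?thesis by simp
  next
    case 3
    let ?Z = "{\<tau>\<in>{s0..e}. b \<tau> = x}"
    have cs: "continuous_on {s0..e} b" using bc continuous_on_subset by blast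
    obtain z where z: "s0 \<le> z" "z \<le> e" "b z = x"
      using IVT2'[of b e x s0, OF 3(1) _ s0 cs] 3 by auto
    have Zne: "?Z \<noteq> {}" using z by auto
    have Zcl: "closed ?Z"
      using continuous_closed_preimage[OF cs closed_atLeastAtMost closed_singleton[of x]]
      by (simp add: vimage_def Int_def)
    have Zbd: "bdd_below ?Z" by (auto intro: bdd_belowI[of _ s0])
    define t1 where "t1 = Inf ?Z"
    have t1Z: "t1 \<in> ?Z" unfolding t1_def using closed_contains_Inf[OF Zne Zbd Zcl] .
    have t1le: "\<And>\<tau>. \<tau> \<in> ?Z \<Longrightarrow> t1 \<le> \<tau>" unfolding t1_def using Zbd by (simp add: cInf_lower)
    have set: "{s0..e} \<inter> {\<tau>. x < b \<tau>} = {s0..<t1}"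
    proof (intro set_eqI iffI)
      fix \<tau> assume h: "\<tau> \<in> {s0..e} \<inter> {\<tau>. x < b \<tau>}"
      have "\<tau> < t1"
      proof (rule ccontr)
        assume "\<not> \<tau> < t1"
        then have "b \<tau> \<le> b t1" using bm by simp
        then show False using h t1Z by auto
      qed
      then show "\<tau> \<in> {s0..<t1}" using h by auto
    next
      fix \<tau> assume h: "\<tau> \<in> {s0..<t1}"
      have "b t1 \<le> b \<tau>" using h bm by simp
      moreover have "b \<tau> \<noteq> x"
      proof
        assume "b \<tau> = x"
        then have "\<tau> \<in> ?Z" using h t1Z by auto
        then show False using t1le h by fastforce
      qed
      ultimately show "\<tau> \<in> {s0..e} \<inter> {\<tau>. x < b \<tau>}" using h t1Z by auto
    qed
    have "{s0..<t1} = {s0..t1} - {t1..t1}" by auto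
    moreover have "emeasure ?\<mu> ({s0..t1} - {t1..t1}) = emeasure ?\<mu> {s0..t1} - emeasure ?\<mu> {t1..t1}"
    proof -
      have z0: "emeasure ?\<mu> {t1} = 0" using Icc[of t1 t1] by simp
      show ?thesis by (rule emeasure_Diff) (use t1Z z0 in auto)
    qed
    ultimately have "emeasure ?\<mu> {s0..<t1} = emeasure ?\<mu> {s0..t1} - emeasure ?\<mu> {t1..t1}" by simp
    also have "\<dots> = ennreal (b s0 - x)" using Icc[of t1 t1] Icc[of s0 t1] t1Z by simp
    finally have L: "emeasure ?\<mu> ({s0..e} \<inter> {\<tau>. x < b \<tau>}) = ennreal (b s0 - x)"
      using set by simp
    have "{b e..b s0} \<inter> {x<..} = {x<..b s0}" using 3 by auto
    then show ?thesis using L 3 by simp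
  qed
qed

lemma PF:
  fixes \<beta> :: "real \<Rightarrow> real" and H :: "real \<Rightarrow> ennreal"
  assumes cont: "continuous_on {0..1} \<beta>"
    and anti: "\<forall>s t. 0 \<le> s \<and> s \<le> t \<and> t \<le> 1 \<longrightarrow> \<beta> t \<le> \<beta> s"
    and s0: "0 \<le> s0" "s0 \<le> e" "e \<le> 1"
    and H: "H \<in> borel_measurable borel"
  shows "(\<integral>\<^sup>+\<tau>. H (\<beta> \<tau>) * indicator {s0..e} \<tau> \<partial>interval_measure (\<lambda>t. - \<beta> (clamp01 t)))
       = (\<integral>\<^sup>+y. H y * indicator {\<beta> e..\<beta> s0} y \<partial>lborel)"
proof -
  define b where "b = (\<lambda>t. \<beta> (clamp01 t))"
  have bc: "continuous_on UNIV b" unfolding b_def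
    by (rule continuous_on_compose2[OF cont clamp01_cont]) (auto simp: clamp01_def)
  have bm: "\<And>x y. x \<le> y \<Longrightarrow> b y \<le> b x" unfolding b_def
    using anti clamp01_range clamp01_mono by (metis atLeastAtMost_iff)
  have bmeas: "b \<in> borel_measurable borel" using bc by (rule borel_measurable_continuous_onI)
  let ?\<mu> = "interval_measure (\<lambda>t. - b t)"
  let ?I = "{s0..e}"
  let ?D = "density ?\<mu> (indicator ?I)"
  have Fm: "\<And>x y. x \<le> y \<Longrightarrow> - b x \<le> - b y" using bm by fastforce
  have Fc: "continuous_on UNIV (\<lambda>t. - b t)" using bc by (intro continuous_intros)
  have be: "b e = \<beta> e" "b s0 = \<beta> s0" unfolding b_def using s0 by (auto simp: clamp01_id)
  have bmeas': "b \<in> measurable ?D borel" using bmeas by (simp add: measurable_def)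
  have "(\<integral>\<^sup>+\<tau>. H (\<beta> \<tau>) * indicator ?I \<tau> \<partial>?\<mu>) = (\<integral>\<^sup>+\<tau>. indicator ?I \<tau> * H (b \<tau>) \<partial>?\<mu>)"
    by (rule nn_integral_cong) (use s0 in \<open>auto simp: b_def clamp01_id mult.commute split: split_indicator\<close>)
  also have "\<dots> = (\<integral>\<^sup>+\<tau>. H (b \<tau>) \<partial>?D)"
    by (rule nn_integral_density[symmetric]) (use H bmeas in auto)
  also have "\<dots> = (\<integral>\<^sup>+y. H y \<partial>distr ?D borel b)"
    by (rule nn_integral_distr[symmetric]) (use H bmeas' in auto)
  also have "distr ?D borel b = density lborel (indicator {b e..b s0})"
  proof (rule measure_eqI_lessThan)
    show "sets (distr ?D borel b) = sets borel" by simp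
    show "sets (density lborel (indicator {b e..b s0})) = sets borel" by simp
    have eq: "emeasure (distr ?D borel b) {x<..} = emeasure ?\<mu> (?I \<inter> {\<tau>. x < b \<tau>})" for x
    proof -
      have "b -` {x<..} \<in> sets borel" using measurable_sets[OF bmeas, of "{x<..}"] by simp
      then have m: "{\<tau>. x < b \<tau>} \<in> sets ?\<mu>" by (simp add: vimage_def)
      show ?thesis
        by (subst emeasure_distr[OF bmeas']) (use m in \<open>auto simp: emeasure_restricted vimage_def\<close>)
    qed
    fix x
    have "emeasure ?\<mu> (?I \<inter> {\<tau>. x < b \<tau>}) \<le> emeasure ?\<mu> ?I"
      by (rule emeasure_mono) auto
    also have "\<dots> = ennreal (- b e - - b s0)"
      using emeasure_interval_measure_Icc[OF s0(2) Fm Fc] by simp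
    finally show "emeasure (distr ?D borel b) {x<..} < \<infinity>"
      using eq by (simp add: le_less_trans)
    show "emeasure (distr ?D borel b) {x<..} = emeasure (density lborel (indicator {b e..b s0})) {x<..}"
      using eq KEY[OF bc bm s0(2), of x] by (simp add: emeasure_restricted)
  qed
  also have "(\<integral>\<^sup>+y. H y \<partial>density lborel (indicator {b e..b s0})) = (\<integral>\<^sup>+y. indicator {b e..b s0} y * H y \<partial>lborel)"
    by (rule nn_integral_density) (use H in auto)
  finally show ?thesis using be unfolding b_def by (simp add: mult.commute)
qed



lemma T_cont: "classT T \<Longrightarrow> 1 \<le> k \<Longrightarrow> continuous_on {0..} (T k)"
  unfolding classT_def by blast
lemma T_0: "classT T \<Longrightarrow> 1 \<le> k \<Longrightarrow> T k 0 = 1"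
  unfolding classT_def by blast
lemma T_pos: "classT T \<Longrightarrow> 1 \<le> k \<Longrightarrow> 0 \<le> x \<Longrightarrow> 0 < T k x \<and> T k x \<le> 1"
  unfolding classT_def by blast
lemma T_Suc: "classT T \<Longrightarrow> 1 \<le> k \<Longrightarrow> 0 < x \<Longrightarrow> T (Suc k) x < T k x"
  unfolding classT_def by blast

lemma T_strict:
  assumes T: "classT T" and k: "1 \<le> k" and xy: "0 \<le> x" "x < y"
  shows "T k y < T k x"
proof -
  obtain D where D: "\<forall>x>0. (T k has_real_derivative D x) (at x) \<and> D x < 0"
    using T k unfolding classT_def by blast
  have c: "continuous_on {x..y} (T k)"
    using T_cont[OF T k] by (rule continuous_on_subset) (use xy in auto)
  have dif: "T k differentiable (at z)" if "x < z" "z < y" for z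
  proof -
    have "z > 0" using that xy by linarith
    then have "(T k has_real_derivative D z) (at z)" using D by blast
    then show ?thesis by (auto simp: real_differentiable_def)
  qed
  obtain l z where lz: "x < z" "z < y" "DERIV (T k) z :> l" "T k y - T k x = (y - x) * l"
    using MVT[OF xy(2) c dif] by blast
  have z0: "z > 0" using lz xy by linarith
  have "l = D z" using D z0 lz(3) DERIV_unique by blast
  then have "l < 0" using D lz xy by auto
  then have "(y - x) * l < 0" using lz xy by (intro mult_pos_neg) auto
  then show ?thesis using lz by linarith
qed

lemma T_mono: assumes "classT T" "1 \<le> k" "0 \<le> x" "x \<le> y" shows "T k y \<le> T k x"
proof (cases "x = y")
  case False then show ?thesis using T_strict[OF assms(1,2,3), of y] assms(4) by simp
qed simp

lemma T_inj: assumes "classT T" "1 \<le> k" "0 \<le> x" "0 \<le> y" "T k x = T k y" shows "x = y"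
proof (rule ccontr)
  assume "x \<noteq> y"
  then consider "x < y" | "y < x" by linarith
  then show False
    using T_strict[OF assms(1,2,3), of y] T_strict[OF assms(1,2,4), of x] assms(5) by cases auto
qed

lemma T_lt1: "classT T \<Longrightarrow> 1 \<le> k \<Longrightarrow> 0 < x \<Longrightarrow> T k x < 1"
  using T_strict[of T k 0 x] T_0[of T k] by auto

lemma T_idx: assumes T: "classT T" and "1 \<le> i" "i \<le> j" "0 \<le> x" shows "T j x \<le> T i x"
  using assms(3,2)
proof (induction j rule: dec_induct)
  case base then show ?case by simp
next
  case (step n)
  have "T (Suc n) x \<le> T n x"
  proof (cases "x = 0")
    case True then show ?thesis using T_0[OF T] step by simp
  next
    case False then show ?thesis using T_Suc[OF T, of n x] step assms(4) by simp
  qed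
  then show ?case using step by simp
qed

lemma P_cont: "effectiveness P \<Longrightarrow> continuous_on {0..1} P"
  unfolding effectiveness_def continuous_on_eq_continuous_within
  using DERIV_continuous by blast
lemma P_strict: "effectiveness P \<Longrightarrow> 0 \<le> x \<Longrightarrow> x < y \<Longrightarrow> y \<le> 1 \<Longrightarrow> P x < P y"
  unfolding effectiveness_def strict_mono_on_def by auto
lemma P_mono: "effectiveness P \<Longrightarrow> 0 \<le> x \<Longrightarrow> x \<le> y \<Longrightarrow> y \<le> 1 \<Longrightarrow> P x \<le> P y"
  using P_strict by (metis order.order_iff_strict)
lemma P_01: "effectiveness P \<Longrightarrow> 0 \<le> x \<Longrightarrow> x \<le> 1 \<Longrightarrow> 0 \<le> P x \<and> P x \<le> 1"
  unfolding effectiveness_def by auto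
lemma P_lt1: "effectiveness P \<Longrightarrow> 0 \<le> x \<Longrightarrow> x < 1 \<Longrightarrow> P x < 1"
  unfolding effectiveness_def by auto
lemma P_1: "effectiveness P \<Longrightarrow> P 1 = 1"
  unfolding effectiveness_def by auto

context
  fixes T :: "nat \<Rightarrow> real \<Rightarrow> real" and k :: nat and c :: real
  assumes T: "classT T" and k: "1 \<le> k" and c: "0 \<le> c"
begin

lemma hold_set: "t \<le> 1 \<Longrightarrow> 0 \<in> {x \<in> {0..c}. t \<le> T k x}"
  using T_0[OF T k] c by auto

lemma hold_bounds: assumes "t \<le> 1" shows "0 \<le> holdT T k c t \<and> holdT T k c t \<le> c"
proof -
  have ne: "{x \<in> {0..c}. t \<le> T k x} \<noteq> {}" using hold_set[OF assms] by blast
  have "0 \<le> holdT T k c t" unfolding holdT_def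
    using hold_set[OF assms] by (intro cSup_upper) (auto intro: bdd_aboveI[of _ c])
  moreover have "holdT T k c t \<le> c" unfolding holdT_def
    using ne by (intro cSup_least) auto
  ultimately show ?thesis by simp
qed

lemma hold_eq_c: "t \<le> T k c \<Longrightarrow> holdT T k c t = c"
  unfolding holdT_def using c by (intro cSup_eq_maximum) auto

lemma hold_inv: assumes "T k c \<le> t" "t \<le> 1" shows "T k (holdT T k c t) = t"
proof -
  have cc: "continuous_on {0..c} (T k)" using T_cont[OF T k] by (rule continuous_on_subset) auto
  obtain x where x: "0 \<le> x" "x \<le> c" "T k x = t"
    using IVT2'[of "T k" c t 0, OF assms(1) _ c cc] T_0[OF T k] assms by auto
  have "holdT T k c t = x" unfolding holdT_def
  proof (rule cSup_eq_maximum)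
    show "x \<in> {x \<in> {0..c}. t \<le> T k x}" using x by auto
    fix y assume "y \<in> {x \<in> {0..c}. t \<le> T k x}"
    then show "y \<le> x" using T_strict[OF T k, of x y] x by (cases "x < y") auto
  qed
  then show ?thesis using x by simp
qed

lemma hold_ge: "t \<le> 1 \<Longrightarrow> t \<le> T k (holdT T k c t)"
  using hold_eq_c hold_inv by (cases "t \<le> T k c") auto

lemma hold_anti: assumes "t1 \<le> t2" "t2 \<le> 1" shows "holdT T k c t2 \<le> holdT T k c t1"
  unfolding holdT_def
  using hold_set[OF assms(2)] assms by (intro cSup_subset_mono) (auto intro: bdd_aboveI[of _ c])

lemma hold_cont: "continuous_on {0..1} (holdT T k c)"
proof -
  have cc: "continuous_on {0..c} (T k)" using T_cont[OF T k] by (rule continuous_on_subset) auto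
  have img: "T k ` {0..c} = {T k c..1}"
  proof
    show "T k ` {0..c} \<subseteq> {T k c..1}"
      using T_mono[OF T k] T_pos[OF T k] by auto
    show "{T k c..1} \<subseteq> T k ` {0..c}"
    proof
      fix t assume "t \<in> {T k c..1}"
      then obtain x where "0 \<le> x" "x \<le> c" "T k x = t"
        using IVT2'[of "T k" c t 0, OF _ _ c cc] T_0[OF T k] by auto
      then show "t \<in> T k ` {0..c}" by auto
    qed
  qed
  have inv: "\<forall>x\<in>{0..c}. holdT T k c (T k x) = x"
  proof
    fix x assume x: "x \<in> {0..c}"
    have t1: "T k x \<le> 1" using T_pos[OF T k] x by auto
    have "T k c \<le> T k x" using T_mono[OF T k] x by auto
    then have "T k (holdT T k c (T k x)) = T k x" using hold_inv t1 by blast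
    moreover have "0 \<le> holdT T k c (T k x)" using hold_bounds[OF t1] by simp
    ultimately show "holdT T k c (T k x) = x" using T_inj[OF T k] x by auto
  qed
  have c1: "continuous_on {T k c..1} (holdT T k c)"
    using continuous_on_inv[OF cc compact_Icc inv] img by simp
  have c2: "continuous_on {0..T k c} (holdT T k c)"
    using continuous_on_cong[of "{0..T k c}" "{0..T k c}" "holdT T k c" "\<lambda>_. c"] hold_eq_c
    by (simp add: continuous_on_const)
  have "{0..1} = {0..T k c} \<union> {T k c..1}" using T_pos[OF T k c] by auto
  then show ?thesis using continuous_on_closed_Un[OF _ _ c2 c1] by simp
qed

end

lemma act_bounds:
  assumes T: "classT T" and k: "1 \<le> k" and s: "0 \<le> s" "s \<le> 1" and b1: "0 \<le> \<beta> 1"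
  shows "s \<le> actT T \<beta> k s \<and> actT T \<beta> k s \<le> 1"
proof -
  have one: "1 \<in> {t \<in> {s..1}. T k (\<beta> t) \<le> t}" using T_pos[OF T k b1] s by auto
  show ?thesis unfolding actT_def
    using one by (auto intro!: cInf_greatest cInf_lower intro: bdd_belowI[of _ s])
qed

lemma act_main:
  assumes T: "classT T" and k: "1 \<le> k" and s: "0 \<le> s" "s \<le> 1"
    and cont: "continuous_on {0..1} \<beta>" and nn: "\<forall>t\<in>{0..1}. 0 \<le> \<beta> t"
    and const: "\<forall>t\<in>{0..s}. \<beta> t = \<beta> 0" and sT: "s \<le> T k (\<beta> 0)"
  defines "e \<equiv> actT T \<beta> k s"
  shows "s \<le> e \<and> e \<le> 1 \<and> T k (\<beta> e) = e \<and> (\<forall>\<tau>\<in>{0..e}. \<tau> \<le> T k (\<beta> \<tau>))"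
proof -
  let ?S = "{t \<in> {s..1}. T k (\<beta> t) \<le> t}"
  have b1: "0 \<le> \<beta> 1" using nn by auto
  have eb: "s \<le> e" "e \<le> 1" using act_bounds[of T k s \<beta>, OF T k s b1] unfolding e_def by auto
  have one: "1 \<in> ?S" using T_pos[OF T k b1] s by auto
  have gc: "continuous_on {0..1} (\<lambda>t. T k (\<beta> t) - t)"
    by (intro continuous_intros continuous_on_compose2[OF T_cont[OF T k] cont]) (use nn in auto)
  have gcs: "continuous_on {s..1} (\<lambda>t. T k (\<beta> t) - t)" using gc by (rule continuous_on_subset) (use s in auto)
  have Scl: "closed ?S"
    using continuous_closed_preimage[OF gcs closed_atLeastAtMost, of "{..0}"]
    by (simp add: vimage_def Int_def)
  have "Inf ?S \<in> ?S"
    by (rule closed_contains_Inf) (use one Scl in \<open>auto intro: bdd_belowI[of _ s]\<close>)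
  then have eS: "e \<in> ?S" unfolding e_def actT_def .
  have before: "\<tau> < T k (\<beta> \<tau>)" if "s \<le> \<tau>" "\<tau> < e" for \<tau>
  proof (rule ccontr)
    assume "\<not> \<tau> < T k (\<beta> \<tau>)"
    then have "\<tau> \<in> ?S" using that eb by auto
    then have "e \<le> \<tau>" unfolding e_def actT_def by (auto intro: cInf_lower bdd_belowI[of _ s])
    then show False using that by simp
  qed
  have le: "\<tau> \<le> T k (\<beta> \<tau>)" if "0 \<le> \<tau>" "\<tau> < e" for \<tau>
  proof (cases "\<tau> \<le> s")
    case True
    have "\<beta> \<tau> = \<beta> 0" using bspec[OF const, of \<tau>] True that by simp
    then show ?thesis using sT that True by simp
  next
    case False then show ?thesis using before[of \<tau>] that by auto
  qed
  have ee: "e \<le> T k (\<beta> e)"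
  proof (cases "s < e")
    case False
    then have "e = s" using eb by simp
    moreover have "\<beta> s = \<beta> 0" using bspec[OF const, of s] s by simp
    ultimately show ?thesis using sT by simp
  next
    case True
    have ge: "continuous_on {s..e} (\<lambda>t. T k (\<beta> t) - t)" using gc by (rule continuous_on_subset) (use s eb in auto)
    have Qcl: "closed ({s..e} \<inter> (\<lambda>t. T k (\<beta> t) - t) -` {0..})"
      using continuous_closed_preimage[OF ge closed_atLeastAtMost closed_atLeast] .
    have "{s..<e} \<subseteq> {s..e} \<inter> (\<lambda>t. T k (\<beta> t) - t) -` {0..}"
      using before by (auto simp: less_imp_le)
    then have "closure {s..<e} \<subseteq> {s..e} \<inter> (\<lambda>t. T k (\<beta> t) - t) -` {0..}"
      using Qcl closure_minimal by blast
    moreover have "e \<in> closure {s..<e}" using True closure_atLeastLessThan[of s e] by simp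
    ultimately have "e \<in> {s..e} \<inter> (\<lambda>t. T k (\<beta> t) - t) -` {0..}" by blast
    then have "T k (\<beta> e) - e \<in> {0..}" by blast
    then show ?thesis by simp
  qed
  then have "T k (\<beta> e) = e" using eS by auto
  moreover have "\<forall>\<tau>\<in>{0..e}. \<tau> \<le> T k (\<beta> \<tau>)"
    using le ee by (metis atLeastAtMost_iff order_less_le)
  ultimately show ?thesis using eb by auto
qed



lemma b_props:
  fixes \<beta> :: "real \<Rightarrow> real"
  assumes cont: "continuous_on {0..1} \<beta>"
    and anti: "\<forall>s t. 0 \<le> s \<and> s \<le> t \<and> t \<le> 1 \<longrightarrow> \<beta> t \<le> \<beta> s"
  shows "continuous_on UNIV (\<lambda>t. - \<beta> (clamp01 t))" "\<And>x y. x \<le> y \<Longrightarrow> - \<beta> (clamp01 x) \<le> - \<beta> (clamp01 y)"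
proof -
  have "continuous_on UNIV (\<lambda>t. \<beta> (clamp01 t))"
    by (rule continuous_on_compose2[OF cont clamp01_cont]) (auto simp: clamp01_def)
  then show "continuous_on UNIV (\<lambda>t. - \<beta> (clamp01 t))" by (rule continuous_on_minus)
  fix x y :: real assume "x \<le> y"
  then show "- \<beta> (clamp01 x) \<le> - \<beta> (clamp01 y)"
    using anti clamp01_range[of x] clamp01_range[of y] clamp01_mono[of x y] by auto
qed

lemma MU:
  fixes \<beta> :: "real \<Rightarrow> real"
  assumes cont: "continuous_on {0..1} \<beta>"
    and anti: "\<forall>s t. 0 \<le> s \<and> s \<le> t \<and> t \<le> 1 \<longrightarrow> \<beta> t \<le> \<beta> s"
    and uv: "0 \<le> u" "u \<le> v" "v \<le> 1"
  shows "emeasure (interval_measure (\<lambda>t. - \<beta> (clamp01 t))) {u..v} = ennreal (\<beta> u - \<beta> v)"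
  using emeasure_interval_measure_Icc[OF uv(2) b_props(2)[OF cont anti] b_props(1)[OF cont anti]] uv
  by (simp add: clamp01_id)

lemma shift_eq: "shift_cons \<beta> e = (\<lambda>t. \<beta> (max t e))"
  by (auto simp: shift_cons_def fun_eq_iff max_def)

lemma shift_props:
  fixes \<beta> :: "real \<Rightarrow> real"
  assumes cont: "continuous_on {0..1} \<beta>"
    and anti: "\<forall>s t. 0 \<le> s \<and> s \<le> t \<and> t \<le> 1 \<longrightarrow> \<beta> t \<le> \<beta> s"
    and nn: "\<forall>t\<in>{0..1}. 0 \<le> \<beta> t" and e: "0 \<le> e" "e \<le> 1"
  shows "continuous_on {0..1} (shift_cons \<beta> e)"
    "\<forall>s t. 0 \<le> s \<and> s \<le> t \<and> t \<le> 1 \<longrightarrow> shift_cons \<beta> e t \<le> shift_cons \<beta> e s"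
    "\<forall>t\<in>{0..1}. 0 \<le> shift_cons \<beta> e t"
    "shift_cons \<beta> e 0 = \<beta> e"
    "\<forall>t\<in>{0..e}. shift_cons \<beta> e t = shift_cons \<beta> e 0"
    "\<And>t. e \<le> t \<Longrightarrow> shift_cons \<beta> e t = \<beta> t"
proof -
  show "continuous_on {0..1} (shift_cons \<beta> e)" unfolding shift_eq
    by (rule continuous_on_compose2[OF cont]) (auto intro!: continuous_intros simp: e)
  show "\<forall>s t. 0 \<le> s \<and> s \<le> t \<and> t \<le> 1 \<longrightarrow> shift_cons \<beta> e t \<le> shift_cons \<beta> e s"
    unfolding shift_eq using anti e by (auto simp: max_def)
  show "\<forall>t\<in>{0..1}. 0 \<le> shift_cons \<beta> e t" unfolding shift_eq using nn e by (auto simp: max_def)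
  show "shift_cons \<beta> e 0 = \<beta> e" unfolding shift_eq using e by (simp add: max_def)
  show "\<forall>t\<in>{0..e}. shift_cons \<beta> e t = shift_cons \<beta> e 0" unfolding shift_eq using e by (simp add: max_def)
  show "\<And>t. e \<le> t \<Longrightarrow> shift_cons \<beta> e t = \<beta> t" unfolding shift_eq by (simp add: max_def)
qed

lemma act_cong:
  assumes "\<And>t. s \<le> t \<Longrightarrow> \<beta>' t = \<beta> t"
  shows "actT T \<beta>' j s = actT T \<beta> j s"
  unfolding actT_def using assms by (metis (no_types, lifting) atLeastAtMost_iff)

locale game =
  fixes P1 P2 :: "real \<Rightarrow> real" and A1 A2 a :: real and m :: nat
    and T :: "nat \<Rightarrow> real \<Rightarrow> real"
  assumes P1: "effectiveness P1" and P2: "effectiveness P2"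
    and A1: "0 < A1" and A2: "0 < A2" and a: "0 < a"
    and T: "classT T"
    and hyp: "\<forall>x\<in>{0<..a}. \<forall>k\<in>{1..m}.
           exp (integral {0..x} (\<lambda>y. ln (1 - P1 (T k y))))
           + (\<Prod>i=1..k. (1 - P2 (T i x))) = 1"
begin

definition E :: "nat \<Rightarrow> real \<Rightarrow> real" where
  "E k x = exp (integral {0..x} (\<lambda>y. ln (1 - P1 (T k y))))"
definition Pr :: "nat \<Rightarrow> real \<Rightarrow> real" where
  "Pr k x = (\<Prod>i=1..k. (1 - P2 (T i x)))"
definition W :: "nat \<Rightarrow> real \<Rightarrow> real" where
  "W k c = (if k = 0 then (if 0 < c then 0 else A1 / (A1 + A2)) else E k c)"
definition V :: "nat \<Rightarrow> real \<Rightarrow> real" where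
  "V k c = A1 - (A1 + A2) * W k c"
definition ft :: "nat \<Rightarrow> real \<Rightarrow> real" where
  "ft k y = ln (1 - P1 (T k (max 0 (min a y))))"

lemma hypE: "0 < x \<Longrightarrow> x \<le> a \<Longrightarrow> 1 \<le> k \<Longrightarrow> k \<le> m \<Longrightarrow> E k x + Pr k x = 1"
  using hyp unfolding E_def Pr_def by auto

lemma E0: "E k 0 = 1" unfolding E_def by simp

lemma Pr_nonneg: assumes "0 \<le> x" shows "0 \<le> Pr k x"
  unfolding Pr_def
proof (rule prod_nonneg)
  fix i assume "i \<in> {1..k}"
  then have "0 < T i x \<and> T i x \<le> 1" using T_pos[OF T _ assms] by auto
  then show "0 \<le> 1 - P2 (T i x)" using P_01[OF P2, of "T i x"] by auto
qed

lemma f_nonpos: assumes "1 \<le> k" "0 \<le> y" shows "ln (1 - P1 (T k y)) \<le> 0"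
proof -
  have "0 < T k y \<and> T k y \<le> 1" using T_pos[OF T assms] .
  then have "0 \<le> 1 - P1 (T k y) \<and> 1 - P1 (T k y) \<le> 1" using P_01[OF P1, of "T k y"] by auto
  then show ?thesis by (cases "1 - P1 (T k y) = 0") auto
qed

lemma INT: assumes k: "1 \<le> k" "k \<le> m" and x: "0 < x" "x \<le> a"
  shows "(\<lambda>y. ln (1 - P1 (T k y))) integrable_on {0..x}"
proof (rule ccontr)
  assume "\<not> ?thesis"
  then have "E k x = 1" unfolding E_def by (simp add: not_integrable_integral)
  then have "Pr k x = 0" using hypE[OF x k] by simp
  then obtain i where i: "i \<in> {1..k}" "1 - P2 (T i x) = 0" unfolding Pr_def by auto
  have "0 < T i x" "T i x < 1" using T_pos[OF T _ less_imp_le[OF x(1)]] T_lt1[OF T _ x(1)] i by auto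
  then have "P2 (T i x) < 1" using P_lt1[OF P2] by auto
  then show False using i by simp
qed

lemma NNINT:
  assumes k: "1 \<le> k" "k \<le> m" and c: "0 \<le> c'" "c' \<le> c" "c \<le> a"
  shows "(\<integral>\<^sup>+y. ennreal (- ln (1 - P1 (T k y))) * indicator {c'..c} y \<partial>lborel)
           = ennreal (integral {0..c'} (\<lambda>y. ln (1 - P1 (T k y))) - integral {0..c} (\<lambda>y. ln (1 - P1 (T k y))))"
    and "0 \<le> integral {0..c'} (\<lambda>y. ln (1 - P1 (T k y))) - integral {0..c} (\<lambda>y. ln (1 - P1 (T k y)))"
proof -
  let ?f = "\<lambda>y. ln (1 - P1 (T k y))"
  have "(\<integral>\<^sup>+y. ennreal (- ?f y) * indicator {c'..c} y \<partial>lborel)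
           = ennreal (integral {0..c'} ?f - integral {0..c} ?f) \<and> 0 \<le> integral {0..c'} ?f - integral {0..c} ?f"
  proof (cases "c = 0")
    case True
    then have c0: "c' = 0" using c by simp
    have "(\<integral>\<^sup>+y. ennreal (- ?f y) * indicator {c'..c} y \<partial>lborel) \<le> (\<integral>\<^sup>+y. \<infinity> * indicator {0::real} y \<partial>lborel)"
      by (rule nn_integral_mono) (use True c0 in \<open>auto split: split_indicator\<close>)
    also have "\<dots> = 0" by (subst nn_integral_cmult_indicator) auto
    finally show ?thesis using True c0 by simp
  next
    case False
    then have cpos: "0 < c" using c by simp
    have fi: "?f integrable_on {0..c}" using INT[OF k cpos c(3)] .
    have fi2: "?f integrable_on {c'..c}" using integrable_subinterval_real[OF fi] c by auto
    have comb: "integral {0..c'} ?f + integral {c'..c} ?f = integral {0..c} ?f"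
      using Henstock_Kurzweil_Integration.integral_combine[OF c(1) c(2) fi] .
    have has: "((\<lambda>y. - ?f y) has_integral (- integral {c'..c} ?f)) {c'..c}"
      using has_integral_neg[OF integrable_integral[OF fi2]] by simp
    have nn: "\<And>y. y \<in> {c'..c} \<Longrightarrow> 0 \<le> - ?f y" using f_nonpos[OF k(1)] c by auto
    have "(\<integral>\<^sup>+y. ennreal (- ?f y) * indicator {c'..c} y \<partial>lborel) = ennreal (- integral {c'..c} ?f)"
      using nn_integral_has_integral_lebesgue'[OF nn has] by simp
    moreover have "0 \<le> - integral {c'..c} ?f"
      using has_integral_nonneg[OF has] nn by auto
    ultimately show ?thesis using comb by (simp add: algebra_simps)
  qed
  then show "(\<integral>\<^sup>+y. ennreal (- ?f y) * indicator {c'..c} y \<partial>lborel)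
           = ennreal (integral {0..c'} ?f - integral {0..c} ?f)"
    and "0 \<le> integral {0..c'} ?f - integral {0..c} ?f" by auto
qed

lemma E_ratio: "E k c' * exp (integral {0..c} (\<lambda>y. ln (1 - P1 (T k y))) - integral {0..c'} (\<lambda>y. ln (1 - P1 (T k y)))) = E k c"
  unfolding E_def by (simp add: exp_add[symmetric])

lemma ft_meas: assumes k: "1 \<le> k" shows "(\<lambda>y. ennreal (- ft k y)) \<in> borel_measurable borel"
proof -
  have c1: "continuous_on UNIV (\<lambda>y. T k (max 0 (min a y)))"
    by (rule continuous_on_compose2[OF T_cont[OF T k]]) (auto intro!: continuous_intros)
  have r: "T k (max 0 (min a y)) \<in> {0..1}" for y
  proof -
    have "0 < T k (max 0 (min a y)) \<and> T k (max 0 (min a y)) \<le> 1" by (rule T_pos[OF T k]) simp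
    then show ?thesis by auto
  qed
  have c2: "continuous_on UNIV (\<lambda>y. 1 - P1 (T k (max 0 (min a y))))"
    by (intro continuous_intros continuous_on_compose2[OF P_cont[OF P1] c1])
       (use r in auto)
  have [measurable]: "(\<lambda>y. 1 - P1 (T k (max 0 (min a y)))) \<in> borel_measurable borel"
    using c2 by (rule borel_measurable_continuous_onI)
  show ?thesis unfolding ft_def by measurable
qed

lemma ft_eq: "0 \<le> y \<Longrightarrow> y \<le> a \<Longrightarrow> ft k y = ln (1 - P1 (T k y))"
  unfolding ft_def by (simp add: max_def min_def)

lemma BR: assumes k: "Suc k \<le> m" and c: "0 \<le> c'" "c' \<le> a"
  shows "P2 (T (Suc k) c') + (1 - P2 (T (Suc k) c')) * W k c' = E (Suc k) c'"
proof (cases "c' = 0")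
  case True
  then show ?thesis using T_0[OF T, of "Suc k"] P_1[OF P2] E0 by simp
next
  case False
  then have cp: "0 < c'" using c by simp
  have h1: "E (Suc k) c' = 1 - Pr (Suc k) c'" using hypE[OF cp c(2) _ k] by simp
  have pr: "Pr (Suc k) c' = Pr k c' * (1 - P2 (T (Suc k) c'))" unfolding Pr_def by simp
  show ?thesis
  proof (cases "k = 0")
    case True then show ?thesis using h1 pr cp by (simp add: W_def Pr_def)
  next
    case False
    then have w: "W k c' = 1 - Pr k c'" using hypE[OF cp c(2), of k] k by (simp add: W_def)
    show ?thesis unfolding w h1 pr by (simp add: algebra_simps)
  qed
qed

lemma BR2: assumes k: "Suc k \<le> m" and c: "0 \<le> c" "c \<le> a" and e: "0 \<le> e" "e \<le> T (Suc k) c"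
  shows "P2 e + (1 - P2 e) * W k c \<le> E (Suc k) c"
proof -
  have T1: "T (Suc k) c \<le> 1" using T_pos[OF T _ c(1)] by simp
  have p: "0 \<le> P2 e" "P2 e \<le> 1" using P_01[OF P2, of e] e T1 by auto
  show ?thesis
  proof (cases "c = 0")
    case True
    have "W k c \<le> 1" using True A1 A2 by (auto simp: W_def E0)
    then have "(1 - P2 e) * W k c \<le> (1 - P2 e) * 1" using p by (intro mult_left_mono) auto
    then show ?thesis using True E0 by simp
  next
    case False
    then have cp: "0 < c" using c by simp
    have h1: "E (Suc k) c = 1 - Pr (Suc k) c" using hypE[OF cp c(2) _ k] by simp
    have pr: "Pr (Suc k) c = Pr k c * (1 - P2 (T (Suc k) c))" unfolding Pr_def by simp
    have w: "W k c = 1 - Pr k c"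
      using hypE[OF cp c(2), of k] k cp by (cases "k = 0") (auto simp: W_def Pr_def)
    have "P2 e \<le> P2 (T (Suc k) c)" using P_mono[OF P2 e T1] .
    then have i: "P2 e * Pr k c \<le> P2 (T (Suc k) c) * Pr k c"
      using Pr_nonneg[OF c(1), of k] by (intro mult_right_mono) auto
    have e1: "P2 e + (1 - P2 e) * (1 - Pr k c) = 1 - Pr k c + P2 e * Pr k c" by (simp add: algebra_simps)
    have e2: "1 - Pr k c * (1 - P2 (T (Suc k) c)) = 1 - Pr k c + P2 (T (Suc k) c) * Pr k c"
      by (simp add: algebra_simps)
    show ?thesis unfolding w h1 pr e1 e2 using i by linarith
  qed
qed

end


context game begin

lemma phi01: "0 \<le> 1 - phiI P1 \<beta> t1 t2 \<and> 1 - phiI P1 \<beta> t1 t2 \<le> 1"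
  unfolding phiI_def Let_def by (auto simp: enn2real_nonneg)

lemma J_upper:
  fixes \<beta> :: "real \<Rightarrow> real"
  assumes K: "1 \<le> K" "K \<le> m"
    and cont: "continuous_on {0..1} \<beta>"
    and anti: "\<forall>s t. 0 \<le> s \<and> s \<le> t \<and> t \<le> 1 \<longrightarrow> \<beta> t \<le> \<beta> s"
    and nn: "\<forall>t\<in>{0..1}. 0 \<le> \<beta> t" and ba: "\<beta> 0 \<le> a"
    and e: "0 \<le> e" "e \<le> 1"
    and below: "\<forall>\<tau>\<in>{0..e}. \<tau> \<le> T K (\<beta> \<tau>)"
  shows "E K (\<beta> 0) \<le> (1 - phiI P1 \<beta> 0 e) * E K (\<beta> e)"
proof -
  let ?\<mu> = "interval_measure (\<lambda>t. - \<beta> (clamp01 t))"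
  let ?g = "\<lambda>\<tau>. ennreal (- ln (1 - P1 \<tau>))"
  define H where "H = (\<lambda>y. if y \<le> 0 then \<infinity> else ennreal (- ft K y))"
  define J where "J = (\<integral>\<^sup>+\<tau>. ?g \<tau> * indicator {0..e} \<tau> \<partial>?\<mu>)"
  let ?f = "\<lambda>y. ln (1 - P1 (T K y))"
  have c'c: "0 \<le> \<beta> e" "\<beta> e \<le> \<beta> 0" using nn anti e by auto
  have Hm: "H \<in> borel_measurable borel" unfolding H_def using ft_meas[OF K(1)] by measurable
  have "J \<le> (\<integral>\<^sup>+\<tau>. H (\<beta> \<tau>) * indicator {0..e} \<tau> \<partial>?\<mu>)"
    unfolding J_def
  proof (rule nn_integral_mono)
    fix \<tau>
    show "?g \<tau> * indicator {0..e} \<tau> \<le> H (\<beta> \<tau>) * indicator {0..e} \<tau>"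
    proof (cases "\<tau> \<in> {0..e} \<and> 0 < \<beta> \<tau>")
      case True
      have bt: "\<beta> \<tau> \<le> a" using anti ba True e by force
      have T1: "T K (\<beta> \<tau>) < 1" using T_lt1[OF T K(1)] True by simp
      have Tnn: "0 \<le> T K (\<beta> \<tau>)" using T_pos[OF T K(1)] True by (simp add: less_imp_le)
      have tt: "\<tau> \<le> T K (\<beta> \<tau>)" using below True by auto
      have pm: "P1 \<tau> \<le> P1 (T K (\<beta> \<tau>))" using P_mono[OF P1 _ tt] T1 True by auto
      have pl: "P1 (T K (\<beta> \<tau>)) < 1" using P_lt1[OF P1 Tnn T1] .
      have "ln (1 - P1 (T K (\<beta> \<tau>))) \<le> ln (1 - P1 \<tau>)"
        using pm pl by (intro ln_mono) auto
      moreover have "ft K (\<beta> \<tau>) = ln (1 - P1 (T K (\<beta> \<tau>)))"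
        using ft_eq[of "\<beta> \<tau>" K] True bt by simp
      ultimately have "?g \<tau> \<le> H (\<beta> \<tau>)" unfolding H_def using True by (auto intro!: ennreal_leI)
      then show ?thesis by (simp add: mult_right_mono)
    next
      case False
      then show ?thesis unfolding H_def by (auto split: split_indicator)
    qed
  qed
  also have "\<dots> = (\<integral>\<^sup>+y. H y * indicator {\<beta> e..\<beta> 0} y \<partial>lborel)"
    by (rule PF[OF cont anti _ e(1) e(2) Hm]) simp
  also have "\<dots> = (\<integral>\<^sup>+y. ennreal (- ?f y) * indicator {\<beta> e..\<beta> 0} y \<partial>lborel)"
  proof (rule nn_integral_cong_AE)
    show "AE y in lborel. H y * indicator {\<beta> e..\<beta> 0} y = ennreal (- ?f y) * indicator {\<beta> e..\<beta> 0} y"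
      using AE_lborel_singleton[of "0::real"]
    proof eventually_elim
      case (elim y)
      show ?case
      proof (cases "y \<in> {\<beta> e..\<beta> 0}")
        case True
        then have "0 < y" "y \<le> a" using elim c'c ba by auto
        then show ?thesis unfolding H_def using ft_eq[of y K] by simp
      qed simp
    qed
  qed
  also have "\<dots> = ennreal (integral {0..\<beta> e} ?f - integral {0..\<beta> 0} ?f)"
    using NNINT(1)[OF K c'c ba] .
  finally have Jle: "J \<le> ennreal (integral {0..\<beta> e} ?f - integral {0..\<beta> 0} ?f)" .
  have D0: "0 \<le> integral {0..\<beta> e} ?f - integral {0..\<beta> 0} ?f" using NNINT(2)[OF K c'c ba] .
  have "J < top" using le_less_trans[OF Jle ennreal_less_top] .
  then have Jfin: "J \<noteq> \<infinity>" by simp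
  have "enn2real J \<le> integral {0..\<beta> e} ?f - integral {0..\<beta> 0} ?f"
    using enn2real_mono[OF Jle] D0 by simp
  then have X: "exp (integral {0..\<beta> 0} ?f - integral {0..\<beta> e} ?f) \<le> exp (- enn2real J)" by simp
  have phi: "1 - phiI P1 \<beta> 0 e = exp (- enn2real J)"
    unfolding phiI_def Let_def J_def[symmetric] using Jfin by simp
  have "E K (\<beta> 0) = E K (\<beta> e) * exp (integral {0..\<beta> 0} ?f - integral {0..\<beta> e} ?f)"
    using E_ratio[of K "\<beta> e" "\<beta> 0"] by simp
  also have "\<dots> \<le> E K (\<beta> e) * exp (- enn2real J)"
    by (rule mult_left_mono[OF X]) (simp add: E_def)
  finally show ?thesis using phi by (simp add: mult.commute)
qed

lemma J_lower:
  fixes \<beta> :: "real \<Rightarrow> real"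
  assumes K: "1 \<le> K" "K \<le> m"
    and cont: "continuous_on {0..1} \<beta>"
    and anti: "\<forall>s t. 0 \<le> s \<and> s \<le> t \<and> t \<le> 1 \<longrightarrow> \<beta> t \<le> \<beta> s"
    and nn: "\<forall>t\<in>{0..1}. 0 \<le> \<beta> t" and ba: "\<beta> 0 \<le> a"
    and e: "0 \<le> s'" "s' \<le> e" "e \<le> 1"
    and on: "\<forall>\<tau>\<in>{s'..e}. T K (\<beta> \<tau>) = \<tau>"
  shows "(1 - phiI P1 \<beta> 0 e) * E K (\<beta> e) \<le> E K (\<beta> s')"
proof -
  let ?\<mu> = "interval_measure (\<lambda>t. - \<beta> (clamp01 t))"
  let ?g = "\<lambda>\<tau>. ennreal (- ln (1 - P1 \<tau>))"
  define G where "G = (\<lambda>y. ennreal (- ft K y))"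
  define J where "J = (\<integral>\<^sup>+\<tau>. ?g \<tau> * indicator {0..e} \<tau> \<partial>?\<mu>)"
  let ?f = "\<lambda>y. ln (1 - P1 (T K y))"
  have bs0: "\<beta> s' \<le> \<beta> 0" using anti[rule_format, of 0 s'] e by auto
  have c'c: "0 \<le> \<beta> e" "\<beta> e \<le> \<beta> s'" "\<beta> s' \<le> a"
    using nn e ba bs0 anti[rule_format, of s' e] by auto
  have Gm: "G \<in> borel_measurable borel" unfolding G_def using ft_meas[OF K(1)] .
  have "(\<integral>\<^sup>+\<tau>. ?g \<tau> * indicator {s'..e} \<tau> \<partial>?\<mu>) \<le> J"
    unfolding J_def
    by (rule nn_integral_mono) (use e in \<open>auto split: split_indicator\<close>)
  moreover have "(\<integral>\<^sup>+\<tau>. ?g \<tau> * indicator {s'..e} \<tau> \<partial>?\<mu>) = (\<integral>\<^sup>+\<tau>. G (\<beta> \<tau>) * indicator {s'..e} \<tau> \<partial>?\<mu>)"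
  proof (rule nn_integral_cong)
    fix \<tau>
    show "?g \<tau> * indicator {s'..e} \<tau> = G (\<beta> \<tau>) * indicator {s'..e} \<tau>"
    proof (cases "\<tau> \<in> {s'..e}")
      case True
      have "\<beta> \<tau> \<le> \<beta> 0" using anti[rule_format, of 0 \<tau>] True e by auto
      moreover have "0 \<le> \<beta> \<tau>" using nn True e by auto
      ultimately have "0 \<le> \<beta> \<tau>" "\<beta> \<tau> \<le> a" using ba by auto
      then have "ft K (\<beta> \<tau>) = ln (1 - P1 \<tau>)" using ft_eq[of "\<beta> \<tau>" K] on True by simp
      then show ?thesis unfolding G_def by simp
    qed simp
  qed
  moreover have "(\<integral>\<^sup>+\<tau>. G (\<beta> \<tau>) * indicator {s'..e} \<tau> \<partial>?\<mu>) = (\<integral>\<^sup>+y. G y * indicator {\<beta> e..\<beta> s'} y \<partial>lborel)"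
    by (rule PF[OF cont anti e Gm])
  moreover have "(\<integral>\<^sup>+y. G y * indicator {\<beta> e..\<beta> s'} y \<partial>lborel) = (\<integral>\<^sup>+y. ennreal (- ?f y) * indicator {\<beta> e..\<beta> s'} y \<partial>lborel)"
  proof (rule nn_integral_cong)
    fix y
    show "G y * indicator {\<beta> e..\<beta> s'} y = ennreal (- ?f y) * indicator {\<beta> e..\<beta> s'} y"
    proof (cases "y \<in> {\<beta> e..\<beta> s'}")
      case True
      then have "0 \<le> y" "y \<le> a" using c'c by auto
      then show ?thesis unfolding G_def using ft_eq[of y K] by simp
    qed simp
  qed
  moreover have "\<dots> = ennreal (integral {0..\<beta> e} ?f - integral {0..\<beta> s'} ?f)"
    using NNINT(1)[OF K c'c] .
  ultimately have Jge: "ennreal (integral {0..\<beta> e} ?f - integral {0..\<beta> s'} ?f) \<le> J" by simp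
  have D0: "0 \<le> integral {0..\<beta> e} ?f - integral {0..\<beta> s'} ?f" using NNINT(2)[OF K c'c] .
  show ?thesis
  proof (cases "J = \<infinity>")
    case True
    then have "1 - phiI P1 \<beta> 0 e = 0" unfolding phiI_def Let_def J_def[symmetric] by simp
    then show ?thesis by (simp add: E_def)
  next
    case False
    have "integral {0..\<beta> e} ?f - integral {0..\<beta> s'} ?f \<le> enn2real J"
      using enn2real_mono[OF Jge] False D0 by (simp add: top.not_eq_extremum)
    then have X: "exp (- enn2real J) \<le> exp (integral {0..\<beta> s'} ?f - integral {0..\<beta> e} ?f)" by simp
    have phi: "1 - phiI P1 \<beta> 0 e = exp (- enn2real J)"
      unfolding phiI_def Let_def J_def[symmetric] using False by simp
    have "exp (- enn2real J) * E K (\<beta> e) \<le> exp (integral {0..\<beta> s'} ?f - integral {0..\<beta> e} ?f) * E K (\<beta> e)"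
      by (rule mult_right_mono[OF X]) (simp add: E_def)
    also have "\<dots> = E K (\<beta> s')" using E_ratio[of K "\<beta> e" "\<beta> s'"] by (simp add: mult.commute)
    finally show ?thesis using phi by simp
  qed
qed

end


context game begin

definition C1 :: "nat \<Rightarrow> (real \<Rightarrow> real) \<Rightarrow> real \<Rightarrow> (nat \<Rightarrow> real) \<Rightarrow> bool" where
  "C1 k \<beta> s \<eta> \<longleftrightarrow> continuous_on {0..1} \<beta> \<and> (\<forall>s t. 0 \<le> s \<and> s \<le> t \<and> t \<le> 1 \<longrightarrow> \<beta> t \<le> \<beta> s)
     \<and> (\<forall>t\<in>{0..1}. 0 \<le> \<beta> t) \<and> \<beta> 0 \<le> a \<and> 0 \<le> s \<and> s \<le> 1 \<and> (\<forall>t\<in>{0..s}. \<beta> t = \<beta> 0)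
     \<and> (1 \<le> k \<longrightarrow> s \<le> T k (\<beta> 0) \<and> \<eta> k = actT T \<beta> k s)
     \<and> (\<forall>j. 1 \<le> j \<and> j < k \<longrightarrow> \<eta> j = actT T \<beta> j (\<eta> (Suc j)))"

lemma V0: "V 0 c = (if 0 < c then A1 else 0)"
  unfolding V_def W_def using A1 A2 by auto

lemma Kpay_step: "Kpay P1 P2 A1 A2 \<beta> \<eta> (Suc k) =
   A1 * (1 - (1 - phiI P1 \<beta> 0 (\<eta> (Suc k)))) - A2 * (1 - phiI P1 \<beta> 0 (\<eta> (Suc k))) * P2 (\<eta> (Suc k))
   + (1 - P2 (\<eta> (Suc k))) * (1 - phiI P1 \<beta> 0 (\<eta> (Suc k))) * Kpay P1 P2 A1 A2 (shift_cons \<beta> (\<eta> (Suc k))) \<eta> k"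
  by (simp add: Let_def)

lemma step_upper:
  assumes X: "0 \<le> X" "X \<le> 1" and p: "0 \<le> p" "p \<le> 1"
    and IH: "K' \<le> V k c'" and br: "p + (1 - p) * W k c' = E (Suc k) c'"
    and J: "E (Suc k) c \<le> X * E (Suc k) c'"
  shows "A1 * (1 - X) - A2 * X * p + (1 - p) * X * K' \<le> V (Suc k) c"
proof -
  have i1: "(1 - p) * X * K' \<le> (1 - p) * X * V k c'" using IH X p by (intro mult_left_mono) auto
  have "A1 * (1 - X) - A2 * X * p + (1 - p) * X * K' \<le> A1 * (1 - X) - A2 * X * p + (1 - p) * X * V k c'"
    using i1 by linarith
  also have "\<dots> = A1 - (A1 + A2) * (X * (p + (1 - p) * W k c'))"
    unfolding V_def by (simp add: algebra_simps)
  also have "\<dots> = A1 - (A1 + A2) * (X * E (Suc k) c')" using br by simp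
  also have "\<dots> \<le> A1 - (A1 + A2) * E (Suc k) c"
    using mult_left_mono[OF J, of "A1 + A2"] A1 A2 by simp
  also have "\<dots> = V (Suc k) c" unfolding V_def W_def by simp
  finally show ?thesis .
qed

lemma step_lower:
  assumes X: "0 \<le> X" "X \<le> 1" and p: "0 \<le> p" "p \<le> 1"
    and IH: "V k c' \<le> K'" and br: "X * (p + (1 - p) * W k c') \<le> E (Suc k) c"
  shows "V (Suc k) c \<le> A1 * (1 - X) - A2 * X * p + (1 - p) * X * K'"
proof -
  have i1: "(1 - p) * X * V k c' \<le> (1 - p) * X * K'" using IH X p by (intro mult_left_mono) auto
  have "V (Suc k) c = A1 - (A1 + A2) * E (Suc k) c" unfolding V_def W_def by simp
  also have "\<dots> \<le> A1 - (A1 + A2) * (X * (p + (1 - p) * W k c'))"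
    using mult_left_mono[OF br, of "A1 + A2"] A1 A2 by simp
  also have "\<dots> = A1 * (1 - X) - A2 * X * p + (1 - p) * X * V k c'"
    unfolding V_def by (simp add: algebra_simps)
  also have "\<dots> \<le> A1 * (1 - X) - A2 * X * p + (1 - p) * X * K'"
    using i1 by linarith
  finally show ?thesis .
qed

lemma L1: "k \<le> m \<Longrightarrow> C1 k \<beta> s \<eta> \<Longrightarrow> Kpay P1 P2 A1 A2 \<beta> \<eta> k \<le> V k (\<beta> 0)"
proof (induction k arbitrary: \<beta> s)
  case 0
  then show ?case by (simp add: V0)
next
  case (Suc k)
  note C = Suc.prems(2)[unfolded C1_def]
  have k1: "(1::nat) \<le> Suc k" by simp
  have cont: "continuous_on {0..1} \<beta>" and anti: "\<forall>s t. 0 \<le> s \<and> s \<le> t \<and> t \<le> 1 \<longrightarrow> \<beta> t \<le> \<beta> s"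
    and nn: "\<forall>t\<in>{0..1}. 0 \<le> \<beta> t" and ba: "\<beta> 0 \<le> a" and s: "0 \<le> s" "s \<le> 1"
    and const: "\<forall>t\<in>{0..s}. \<beta> t = \<beta> 0" and sT: "s \<le> T (Suc k) (\<beta> 0)"
    and eta: "\<eta> (Suc k) = actT T \<beta> (Suc k) s"
    and etaj: "\<forall>j. 1 \<le> j \<and> j < Suc k \<longrightarrow> \<eta> j = actT T \<beta> j (\<eta> (Suc j))"
    using C k1 by blast+
  define e where "e = \<eta> (Suc k)"
  have am: "s \<le> e \<and> e \<le> 1 \<and> T (Suc k) (\<beta> e) = e \<and> (\<forall>\<tau>\<in>{0..e}. \<tau> \<le> T (Suc k) (\<beta> \<tau>))"
    unfolding e_def eta by (rule act_main[OF T _ s cont nn const sT]) simp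
  then have e: "0 \<le> e" "e \<le> 1" and Te: "T (Suc k) (\<beta> e) = e"
    and below: "\<forall>\<tau>\<in>{0..e}. \<tau> \<le> T (Suc k) (\<beta> \<tau>)" using s by auto
  define \<beta>' where "\<beta>' = shift_cons \<beta> e"
  note sp = shift_props[OF cont anti nn e, folded \<beta>'_def]
  have be: "0 \<le> \<beta> e" "\<beta> e \<le> \<beta> 0" using nn e anti[rule_format, of 0 e] by auto
  have b1: "0 \<le> \<beta> 1" using nn by auto
  have chain: "d \<le> k \<longrightarrow> e \<le> \<eta> (Suc k - d) \<and> \<eta> (Suc k - d) \<le> 1" for d
  proof (induction d)
    case 0 then show ?case using e e_def by simp
  next
    case (Suc d)
    show ?case
    proof
      assume d: "Suc d \<le> k"
      define i where "i = Suc k - Suc d"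
      have i: "1 \<le> i" "i < Suc k" "Suc i = Suc k - d" using d unfolding i_def by auto
      have ih: "e \<le> \<eta> (Suc i) \<and> \<eta> (Suc i) \<le> 1" using Suc.IH d i(3) by simp
      have "\<eta> i = actT T \<beta> i (\<eta> (Suc i))" using etaj i by auto
      moreover have "\<eta> (Suc i) \<le> actT T \<beta> i (\<eta> (Suc i)) \<and> actT T \<beta> i (\<eta> (Suc i)) \<le> 1"
        by (rule act_bounds[of T i _ \<beta>, OF T i(1) _ _ b1]) (use ih e in auto)
      ultimately show "e \<le> \<eta> (Suc k - Suc d) \<and> \<eta> (Suc k - Suc d) \<le> 1"
        using ih unfolding i_def by auto
    qed
  qed
  have chain': "e \<le> \<eta> i" if "1 \<le> i" "i \<le> Suc k" for i
    using chain[of "Suc k - i"] that by auto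
  have C': "C1 k \<beta>' e \<eta>"
    unfolding C1_def
  proof (intro conjI)
    show "continuous_on {0..1} \<beta>'" using sp(1) .
    show "\<forall>s t. 0 \<le> s \<and> s \<le> t \<and> t \<le> 1 \<longrightarrow> \<beta>' t \<le> \<beta>' s" using sp(2) .
    show "\<forall>t\<in>{0..1}. 0 \<le> \<beta>' t" using sp(3) .
    show "\<beta>' 0 \<le> a" using sp(4) be ba by simp
    show "0 \<le> e" "e \<le> 1" using e by auto
    show "\<forall>t\<in>{0..e}. \<beta>' t = \<beta>' 0" using sp(5) .
    show "1 \<le> k \<longrightarrow> e \<le> T k (\<beta>' 0) \<and> \<eta> k = actT T \<beta>' k e"
    proof
      assume k1: "1 \<le> k"
      have "e \<le> T k (\<beta>' 0)" using T_idx[OF T k1 _ be(1), of "Suc k"] Te sp(4) by simp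
      moreover have "\<eta> k = actT T \<beta> k e" using etaj k1 e_def by auto
      moreover have "actT T \<beta> k e = actT T \<beta>' k e" by (rule act_cong[symmetric]) (use sp(6) in auto)
      ultimately show "e \<le> T k (\<beta>' 0) \<and> \<eta> k = actT T \<beta>' k e" by simp
    qed
    show "\<forall>j. 1 \<le> j \<and> j < k \<longrightarrow> \<eta> j = actT T \<beta>' j (\<eta> (Suc j))"
    proof (intro allI impI)
      fix j assume j: "1 \<le> j \<and> j < k"
      have "\<eta> j = actT T \<beta> j (\<eta> (Suc j))" using etaj j by auto
      also have "\<dots> = actT T \<beta>' j (\<eta> (Suc j))"
        by (rule act_cong[symmetric]) (use sp(6) chain'[of "Suc j"] j in auto)
      finally show "\<eta> j = actT T \<beta>' j (\<eta> (Suc j))" .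
    qed
  qed
  have IH: "Kpay P1 P2 A1 A2 \<beta>' \<eta> k \<le> V k (\<beta>' 0)"
    using Suc.IH[OF _ C'] Suc.prems(1) by simp
  have X: "0 \<le> 1 - phiI P1 \<beta> 0 e" "1 - phiI P1 \<beta> 0 e \<le> 1" using phi01 by auto
  have p: "0 \<le> P2 e" "P2 e \<le> 1" using P_01[OF P2] e by auto
  have br: "P2 e + (1 - P2 e) * W k (\<beta> e) = E (Suc k) (\<beta> e)"
    using BR[OF Suc.prems(1) be(1)] be ba Te by simp
  have J: "E (Suc k) (\<beta> 0) \<le> (1 - phiI P1 \<beta> 0 e) * E (Suc k) (\<beta> e)"
    by (rule J_upper[OF _ Suc.prems(1) cont anti nn ba e below]) simp
  have IH': "Kpay P1 P2 A1 A2 \<beta>' \<eta> k \<le> V k (\<beta> e)" using IH sp(4) by simp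
  show ?case
    unfolding Kpay_step e_def[symmetric] \<beta>'_def[symmetric]
    by (rule step_upper[OF X p IH' br J])
qed

end


lemma eta_chain:
  assumes ord: "\<forall>j. 1 \<le> j \<and> j < K \<longrightarrow> \<eta> (Suc j) \<le> (\<eta> j :: real)"
    and ij: "1 \<le> i" "i \<le> j" "j \<le> K"
  shows "\<eta> j \<le> \<eta> i"
  using ij(2,3)
proof (induction j rule: dec_induct)
  case base then show ?case by simp
next
  case (step n)
  then have "\<eta> (Suc n) \<le> \<eta> n" using ord ij(1) by auto
  then show ?case using step by simp
qed

context game begin

definition C2 :: "nat \<Rightarrow> (real \<Rightarrow> real) \<Rightarrow> real \<Rightarrow> (nat \<Rightarrow> real) \<Rightarrow> bool" where
  "C2 k \<beta> s \<eta> \<longleftrightarrow> continuous_on {0..1} \<beta> \<and> (\<forall>s t. 0 \<le> s \<and> s \<le> t \<and> t \<le> 1 \<longrightarrow> \<beta> t \<le> \<beta> s)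
     \<and> (\<forall>t\<in>{0..1}. 0 \<le> \<beta> t) \<and> \<beta> 0 \<le> a \<and> 0 \<le> s \<and> (\<forall>t\<in>{0..s}. \<beta> t = \<beta> 0)
     \<and> (1 \<le> k \<longrightarrow> s \<le> T k (\<beta> 0) \<and> s \<le> \<eta> k \<and> \<eta> 1 \<le> 1)
     \<and> (\<forall>j. 1 \<le> j \<and> j < k \<longrightarrow> \<eta> (Suc j) \<le> \<eta> j)
     \<and> (\<forall>j. 1 \<le> j \<and> j \<le> k \<longrightarrow> (\<forall>t. (if j = k then s else \<eta> (Suc j)) \<le> t \<and> t \<le> \<eta> j
            \<longrightarrow> \<beta> t = holdT T j (\<beta> (if j = k then s else \<eta> (Suc j))) t))"

lemma L2: "k \<le> m \<Longrightarrow> C2 k \<beta> s \<eta> \<Longrightarrow> V k (\<beta> 0) \<le> Kpay P1 P2 A1 A2 \<beta> \<eta> k"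
proof (induction k arbitrary: \<beta> s)
  case 0
  then show ?case by (simp add: V0)
next
  case (Suc k)
  note C = Suc.prems(2)[unfolded C2_def]
  have k1: "(1::nat) \<le> Suc k" by simp
  have cont: "continuous_on {0..1} \<beta>" and anti: "\<forall>s t. 0 \<le> s \<and> s \<le> t \<and> t \<le> 1 \<longrightarrow> \<beta> t \<le> \<beta> s"
    and nn: "\<forall>t\<in>{0..1}. 0 \<le> \<beta> t" and ba: "\<beta> 0 \<le> a" and s: "0 \<le> s"
    and const: "\<forall>t\<in>{0..s}. \<beta> t = \<beta> 0" and sT: "s \<le> T (Suc k) (\<beta> 0)"
    and se: "s \<le> \<eta> (Suc k)" and e1: "\<eta> 1 \<le> 1"
    and ord: "\<forall>j. 1 \<le> j \<and> j < Suc k \<longrightarrow> \<eta> (Suc j) \<le> \<eta> j"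
    and ph: "\<forall>j. 1 \<le> j \<and> j \<le> Suc k \<longrightarrow> (\<forall>t. (if j = Suc k then s else \<eta> (Suc j)) \<le> t \<and> t \<le> \<eta> j
            \<longrightarrow> \<beta> t = holdT T j (\<beta> (if j = Suc k then s else \<eta> (Suc j))) t)"
    using C k1 by blast+
  define e where "e = \<eta> (Suc k)"
  define c where "c = \<beta> 0"
  have e: "0 \<le> e" "e \<le> 1" "s \<le> e"
    using se s e1 eta_chain[OF ord, of 1 "Suc k"] unfolding e_def by auto
  have bs: "\<beta> s = c" using bspec[OF const, of s] s unfolding c_def by simp
  have c: "0 \<le> c" "c \<le> a" using nn ba unfolding c_def by auto
  have phK: "\<beta> t = holdT T (Suc k) c t" if "s \<le> t" "t \<le> e" for t
    using ph[rule_format, of "Suc k" t] that bs unfolding e_def by simp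
  have be: "0 \<le> \<beta> e" "\<beta> e \<le> \<beta> 0" using nn e anti[rule_format, of 0 e] by auto
  have c': "\<beta> e = holdT T (Suc k) c e" using phK e by simp
  have Tge: "e \<le> T (Suc k) (\<beta> e)" unfolding c' by (rule hold_ge[OF T k1 c(1) e(2)])
  define \<beta>' where "\<beta>' = shift_cons \<beta> e"
  note sp = shift_props[OF cont anti nn e(1,2), folded \<beta>'_def]
  have chain': "e \<le> \<eta> i" if "1 \<le> i" "i \<le> Suc k" for i
    using eta_chain[OF ord that(1) that(2)] unfolding e_def by simp
  have C': "C2 k \<beta>' e \<eta>"
    unfolding C2_def
  proof (intro conjI)
    show "continuous_on {0..1} \<beta>'" using sp(1) .
    show "\<forall>s t. 0 \<le> s \<and> s \<le> t \<and> t \<le> 1 \<longrightarrow> \<beta>' t \<le> \<beta>' s" using sp(2) .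
    show "\<forall>t\<in>{0..1}. 0 \<le> \<beta>' t" using sp(3) .
    show "\<beta>' 0 \<le> a" using sp(4) be ba by simp
    show "0 \<le> e" using e by auto
    show "\<forall>t\<in>{0..e}. \<beta>' t = \<beta>' 0" using sp(5) .
    show "1 \<le> k \<longrightarrow> e \<le> T k (\<beta>' 0) \<and> e \<le> \<eta> k \<and> \<eta> 1 \<le> 1"
    proof
      assume k1: "1 \<le> k"
      have "e \<le> T k (\<beta>' 0)" using T_idx[OF T k1 _ be(1), of "Suc k"] Tge sp(4) by simp
      moreover have "e \<le> \<eta> k" using ord k1 unfolding e_def by auto
      ultimately show "e \<le> T k (\<beta>' 0) \<and> e \<le> \<eta> k \<and> \<eta> 1 \<le> 1" using e1 by simp
    qed
    show "\<forall>j. 1 \<le> j \<and> j < k \<longrightarrow> \<eta> (Suc j) \<le> \<eta> j" using ord by auto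
    show "\<forall>j. 1 \<le> j \<and> j \<le> k \<longrightarrow> (\<forall>t. (if j = k then e else \<eta> (Suc j)) \<le> t \<and> t \<le> \<eta> j
            \<longrightarrow> \<beta>' t = holdT T j (\<beta>' (if j = k then e else \<eta> (Suc j))) t)"
    proof (intro allI impI)
      fix j t assume j: "1 \<le> j \<and> j \<le> k" and t: "(if j = k then e else \<eta> (Suc j)) \<le> t \<and> t \<le> \<eta> j"
      have pj: "(if j = k then e else \<eta> (Suc j)) = \<eta> (Suc j)" unfolding e_def by simp
      have ej: "e \<le> \<eta> (Suc j)" using chain'[of "Suc j"] j by simp
      have "\<beta> t = holdT T j (\<beta> (\<eta> (Suc j))) t"
        using ph[rule_format, of j t] j t pj by simp
      moreover have "\<beta>' t = \<beta> t" using sp(6) t pj ej by simp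
      moreover have "\<beta>' (\<eta> (Suc j)) = \<beta> (\<eta> (Suc j))" using sp(6) ej by simp
      ultimately show "\<beta>' t = holdT T j (\<beta>' (if j = k then e else \<eta> (Suc j))) t" using pj by simp
    qed
  qed
  have IH: "V k (\<beta>' 0) \<le> Kpay P1 P2 A1 A2 \<beta>' \<eta> k"
    using Suc.IH[OF _ C'] Suc.prems(1) by simp
  have X: "0 \<le> 1 - phiI P1 \<beta> 0 e" "1 - phiI P1 \<beta> 0 e \<le> 1" using phi01 by auto
  have p: "0 \<le> P2 e" "P2 e \<le> 1" using P_01[OF P2] e by auto
  have key: "(1 - phiI P1 \<beta> 0 e) * (P2 e + (1 - P2 e) * W k (\<beta> e)) \<le> E (Suc k) c"
  proof (cases "e \<le> T (Suc k) c")
    case True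
    have bc: "\<beta> t = c" if "0 \<le> t" "t \<le> e" for t
    proof (cases "t \<le> s")
      case True then show ?thesis using bspec[OF const, of t] that unfolding c_def by simp
    next
      case False
      then have "\<beta> t = holdT T (Suc k) c t" using phK that by simp
      also have "\<dots> = c" using hold_eq_c[OF T k1 c(1)] that True by simp
      finally show ?thesis .
    qed
    have bec: "\<beta> e = c" using bc e by simp
    let ?\<mu> = "interval_measure (\<lambda>t. - \<beta> (clamp01 t))"
    have "(\<integral>\<^sup>+\<tau>. ennreal (- ln (1 - P1 \<tau>)) * indicator {0..e} \<tau> \<partial>?\<mu>) \<le> (\<integral>\<^sup>+\<tau>. \<infinity> * indicator {0..e::real} \<tau> \<partial>?\<mu>)"
      by (rule nn_integral_mono) (auto split: split_indicator)
    also have "\<dots> = \<infinity> * emeasure ?\<mu> {0..e}" by (rule nn_integral_cmult_indicator) simp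
    also have "emeasure ?\<mu> {0..e} = 0"
    proof -
      have b0: "\<beta> 0 = c" using bc[of 0] e by simp
      show ?thesis using MU[OF cont anti _ e(1) e(2)] b0 bec by simp
    qed
    finally have J0: "(\<integral>\<^sup>+\<tau>. ennreal (- ln (1 - P1 \<tau>)) * indicator {0..e} \<tau> \<partial>?\<mu>) = 0" by simp
    have "1 - phiI P1 \<beta> 0 e = 1" unfolding phiI_def Let_def J0 by simp
    then show ?thesis using BR2[OF Suc.prems(1) c e(1) True] bec by simp
  next
    case False
    define s' where "s' = T (Suc k) c"
    have s': "0 \<le> s'" "s' \<le> e" "s \<le> s'" using False T_pos[OF T k1 c(1)] sT unfolding s'_def c_def by auto
    have on: "\<forall>\<tau>\<in>{s'..e}. T (Suc k) (\<beta> \<tau>) = \<tau>"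
    proof
      fix \<tau> assume \<tau>: "\<tau> \<in> {s'..e}"
      then have "\<beta> \<tau> = holdT T (Suc k) c \<tau>" using phK s' by simp
      then show "T (Suc k) (\<beta> \<tau>) = \<tau>" using hold_inv[OF T k1 c(1)] \<tau> e unfolding s'_def by simp
    qed
    have J: "(1 - phiI P1 \<beta> 0 e) * E (Suc k) (\<beta> e) \<le> E (Suc k) (\<beta> s')"
      by (rule J_lower[OF _ Suc.prems(1) cont anti nn ba s'(1,2) e(2) on]) simp
    have bs': "\<beta> s' = c" using phK[of s'] s' hold_eq_c[OF T k1 c(1)] unfolding s'_def by simp
    have Te: "T (Suc k) (\<beta> e) = e" using on e s' by simp
    have br: "P2 e + (1 - P2 e) * W k (\<beta> e) = E (Suc k) (\<beta> e)"
      using BR[OF Suc.prems(1) be(1)] be ba Te by simp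
    show ?thesis using J bs' br by simp
  qed
  have IH': "V k (\<beta> e) \<le> Kpay P1 P2 A1 A2 \<beta>' \<eta> k" using IH sp(4) by simp
  show ?case
    unfolding Kpay_step e_def[symmetric] \<beta>'_def[symmetric] c_def[symmetric]
    by (rule step_lower[OF X p IH' key])
qed

end


definition anti_on :: "real set \<Rightarrow> (real \<Rightarrow> real) \<Rightarrow> bool" where
  "anti_on S f \<longleftrightarrow> (\<forall>x y. x \<in> S \<and> y \<in> S \<and> x \<le> y \<longrightarrow> f y \<le> f x)"

lemma glue:
  assumes "u \<le> v" "v \<le> w" "continuous_on {u..v} f" "anti_on {u..v} f" "continuous_on {v..w} f" "anti_on {v..w} f"
  shows "continuous_on {u..w} f \<and> anti_on {u..w} f"
proof
  have "{u..w} = {u..v} \<union> {v..w}" using assms by auto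
  then show "continuous_on {u..w} f" using continuous_on_closed_Un[OF _ _ assms(3) assms(5)] by simp
  show "anti_on {u..w} f" unfolding anti_on_def
  proof (intro allI impI)
    fix x y assume h: "x \<in> {u..w} \<and> y \<in> {u..w} \<and> x \<le> y"
    consider "y \<le> v" | "v \<le> x" | "x \<le> v" "v \<le> y" by linarith
    then show "f y \<le> f x"
    proof cases
      case 1 then show ?thesis using assms(4) h unfolding anti_on_def by auto
    next
      case 2 then show ?thesis using assms(6) h unfolding anti_on_def by auto
    next
      case 3
      have "f v \<le> f x" using assms(4) h 3 assms(1) unfolding anti_on_def by auto
      moreover have "f y \<le> f v" using assms(6) h 3 assms(2) unfolding anti_on_def by auto
      ultimately show ?thesis by simp
    qed
  qed
qed

lemma piece:
  assumes "\<forall>t\<in>{u..v}. f t = g t" "continuous_on {u..v} g" "anti_on {u..v} g"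
  shows "continuous_on {u..v} f \<and> anti_on {u..v} f"
  using assms continuous_on_cong[of "{u..v}" "{u..v}" f g] unfolding anti_on_def by auto

context game begin

lemma hold_piece:
  assumes j: "1 \<le> j" and c: "0 \<le> c" and uv: "0 \<le> u" "v \<le> 1"
  shows "continuous_on {u..v} (holdT T j c) \<and> anti_on {u..v} (holdT T j c)"
proof
  show "continuous_on {u..v} (holdT T j c)"
    using hold_cont[OF T j c] by (rule continuous_on_subset) (use uv in auto)
  show "anti_on {u..v} (holdT T j c)" unfolding anti_on_def
    using hold_anti[OF T j c] uv by auto
qed

context
  fixes \<eta> :: "nat \<Rightarrow> real"
  assumes am: "action_moments m \<eta>"
begin

abbreviation "R j \<equiv> cT T \<eta> m a (m - j)"
abbreviation "\<alpha> \<equiv> alphaT T \<eta> m a"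

lemma ord: "\<forall>j. 1 \<le> j \<and> j < m \<longrightarrow> \<eta> (Suc j) \<le> \<eta> j"
  using am unfolding action_moments_def by auto

lemma eta_bnd: assumes "1 \<le> i" "i \<le> m" shows "0 \<le> \<eta> i \<and> \<eta> i \<le> 1"
proof -
  have "\<eta> m \<le> \<eta> i" "\<eta> i \<le> \<eta> 1" using eta_chain[OF ord] assms by auto
  moreover have "0 \<le> \<eta> m" "\<eta> 1 \<le> 1" using am assms unfolding action_moments_def by auto
  ultimately show ?thesis by simp
qed

lemma R_m: "R m = a" by simp

lemma R_step: assumes "i < m" shows "R i = holdT T (Suc i) (R (Suc i)) (\<eta> (Suc i))"
proof -
  have "m - i = Suc (m - Suc i)" using assms by simp
  moreover have "m - (m - Suc i) = Suc i" using assms by simp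
  ultimately show ?thesis by simp
qed

lemma R_bnd: "i \<le> m \<Longrightarrow> 0 \<le> R i \<and> R i \<le> a"
proof (induction "m - i" arbitrary: i)
  case 0 then have "i = m" by simp
  then show ?case using a by simp
next
  case (Suc d)
  then have i: "i < m" "d = m - Suc i" by auto
  then have ih: "0 \<le> R (Suc i) \<and> R (Suc i) \<le> a" using Suc.hyps(1)[of "Suc i"] by simp
  have "0 \<le> holdT T (Suc i) (R (Suc i)) (\<eta> (Suc i)) \<and> holdT T (Suc i) (R (Suc i)) (\<eta> (Suc i)) \<le> R (Suc i)"
    by (rule hold_bounds[OF T _ _]) (use ih eta_bnd[of "Suc i"] i in auto)
  then show ?case using R_step[OF i(1)] ih by simp
qed

lemma R_T: assumes "1 \<le> i" "i < m" shows "\<eta> (Suc i) \<le> T i (R i)"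
proof -
  have "\<eta> (Suc i) \<le> T (Suc i) (R i)"
    unfolding R_step[OF assms(2)]
    by (rule hold_ge[OF T]) (use R_bnd[of "Suc i"] eta_bnd[of "Suc i"] assms in auto)
  also have "\<dots> \<le> T i (R i)" by (rule T_idx[OF T assms(1)]) (use R_bnd[of i] assms in auto)
  finally show ?thesis .
qed

definition N :: "real \<Rightarrow> nat set" where "N t = {i \<in> {1..m}. t \<le> \<eta> i}"

lemma alpha_eq: "\<alpha> t = (if card (N t) = 0 then R 0 else holdT T (card (N t)) (R (card (N t))) t)"
  by (simp only: alphaT_def N_def Let_def diff_zero)

lemma N_eq: "N t = {1..card (N t)}"
proof (cases "N t = {}")
  case True then show ?thesis by simp
next
  case False
  have fin: "finite (N t)" unfolding N_def by simp
  define M where "M = Max (N t)"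
  have MN: "M \<in> N t" unfolding M_def using Max_in[OF fin False] .
  have "N t = {1..M}"
  proof
    show "N t \<subseteq> {1..M}" unfolding M_def using fin by (auto simp: N_def)
    show "{1..M} \<subseteq> N t"
    proof
      fix i assume i: "i \<in> {1..M}"
      have "\<eta> M \<le> \<eta> i" using eta_chain[OF ord, of i M] i MN unfolding N_def by auto
      then show "i \<in> N t" using MN i unfolding N_def by auto
    qed
  qed
  then show ?thesis by simp
qed

lemma N_le: "card (N t) \<le> m"
proof -
  have "N t \<subseteq> {1..m}" unfolding N_def by auto
  then show ?thesis using card_mono[of "{1..m}" "N t"] by simp
qed

lemma N_mem: "i \<in> N t \<longleftrightarrow> 1 \<le> i \<and> i \<le> card (N t)"
  using N_eq[of t] by (metis atLeastAtMost_iff)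

definition prv :: "nat \<Rightarrow> real" where "prv j = (if j = m then 0 else \<eta> (Suc j))"

lemma alpha_phase:
  assumes j: "1 \<le> j" "j \<le> m" and t: "prv j \<le> t" "t \<le> \<eta> j"
  shows "\<alpha> t = holdT T j (R j) t"
proof -
  define n where "n = card (N t)"
  have jN: "j \<in> N t" using j t unfolding N_def by auto
  then have jn: "j \<le> n" using N_mem unfolding n_def by blast
  have nm: "n \<le> m" using N_le unfolding n_def .
  have t1: "t \<le> 1" using t eta_bnd[OF j] by simp
  have a1: "\<alpha> t = holdT T n (R n) t" using alpha_eq[of t] jn j unfolding n_def by simp
  show ?thesis
  proof (cases "n = j")
    case True then show ?thesis using a1 by simp
  next
    case False
    then have jn': "j < n" using jn by simp
    then have jm: "j < m" using nm by simp
    have tie: "\<eta> i = t" if "j < i" "i \<le> n" for i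
    proof -
      have "i \<in> N t" using N_mem[of i t] that jn' j unfolding n_def by auto
      then have "t \<le> \<eta> i" unfolding N_def by auto
      moreover have "\<eta> i \<le> \<eta> (Suc j)" using eta_chain[OF ord, of "Suc j" i] that nm by auto
      moreover have "\<eta> (Suc j) \<le> t" using t jm unfolding prv_def by simp
      ultimately show ?thesis by simp
    qed
    have Rn1: "R (n - 1) = holdT T n (R n) t"
      using R_step[of "n - 1"] jn' nm tie[of n] j by simp
    have TRn: "t \<le> T n (R (n - 1))" unfolding Rn1
      by (rule hold_ge[OF T]) (use R_bnd[of n] nm j jn' t1 in auto)
    have down: "d \<le> n - 1 - j \<longrightarrow> R (n - 1 - d) = R (n - 1)" for d
    proof (induction d)
      case 0 then show ?case by simp
    next
      case (Suc d)
      show ?case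
      proof
        assume d: "Suc d \<le> n - 1 - j"
        define i where "i = n - 1 - d"
        have i: "j < i" "i \<le> n - 1" "n - 1 - Suc d = i - 1" "1 \<le> i" using d j unfolding i_def by auto
        have Ri: "R i = R (n - 1)" using Suc.IH d unfolding i_def by simp
        have "R (i - 1) = holdT T i (R i) (\<eta> i)" using R_step[of "i - 1"] i nm by simp
        also have "\<eta> i = t" using tie[of i] i by simp
        also have "holdT T i (R i) t = R i"
        proof (rule hold_eq_c[OF T i(4)])
          show "0 \<le> R i" using R_bnd[of i] i nm by simp
          have "T n (R i) \<le> T i (R i)" by (rule T_idx[OF T i(4)]) (use i R_bnd[of i] nm in auto)
          then show "t \<le> T i (R i)" using TRn Ri by simp
        qed
        finally show "R (n - 1 - Suc d) = R (n - 1)" using Ri i by simp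
      qed
    qed
    have Rj: "R j = R (n - 1)" using down[of "n - 1 - j"] jn' by simp
    have "holdT T j (R j) t = R j"
    proof (rule hold_eq_c[OF T j(1)])
      show "0 \<le> R j" using R_bnd[of j] j by simp
      have "T n (R j) \<le> T j (R j)" by (rule T_idx[OF T j(1)]) (use jn R_bnd[of j] j in auto)
      then show "t \<le> T j (R j)" using TRn Rj by simp
    qed
    then show ?thesis using a1 Rn1 Rj by simp
  qed
qed

lemma alpha_prv: assumes j: "1 \<le> j" "j \<le> m" shows "\<alpha> (prv j) = R j"
proof -
  have p: "prv j \<le> \<eta> j" "0 \<le> prv j"
    using eta_chain[OF ord, of j "Suc j"] j eta_bnd[of j] eta_bnd[of "Suc j"] unfolding prv_def by auto
  have "\<alpha> (prv j) = holdT T j (R j) (prv j)" using alpha_phase[OF j _ p(1)] by simp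
  also have "\<dots> = R j"
  proof (rule hold_eq_c[OF T j(1)])
    show "0 \<le> R j" using R_bnd[of j] j by simp
    show "prv j \<le> T j (R j)"
    proof (cases "j = m")
      case True then show ?thesis unfolding prv_def using T_pos[OF T j(1), of "R j"] R_bnd[of j] by simp
    next
      case False then show ?thesis unfolding prv_def using R_T[OF j(1)] j by simp
    qed
  qed
  finally show ?thesis .
qed

lemma alpha_tail: assumes "1 \<le> m" "\<eta> 1 \<le> t" shows "\<alpha> t = R 0"
proof (cases "\<eta> 1 < t")
  case True
  have "N t = {}"
  proof -
    have "\<eta> i < t" if "i \<in> {1..m}" for i using eta_chain[OF ord, of 1 i] that True by auto
    then show ?thesis unfolding N_def by force
  qed
  then show ?thesis using alpha_eq[of t] by simp
next
  case False
  then have t: "t = \<eta> 1" using assms by simp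
  have "prv 1 \<le> \<eta> 1"
  proof (cases "m = 1")
    case True then show ?thesis using eta_bnd[of 1] unfolding prv_def by simp
  next
    case False
    then have "\<eta> (Suc 1) \<le> \<eta> 1" using ord assms by auto
    then show ?thesis using False unfolding prv_def by simp
  qed
  then have "\<alpha> t = holdT T 1 (R 1) (\<eta> 1)" using alpha_phase[of 1] t assms by simp
  also have "\<dots> = R 0" using R_step[of 0] assms by simp
  finally show ?thesis .
qed

lemma alpha_glue: assumes "1 \<le> m" shows "d < m \<Longrightarrow> continuous_on {0..\<eta> (m - d)} \<alpha> \<and> anti_on {0..\<eta> (m - d)} \<alpha>"
proof (induction d)
  case 0
  have "\<forall>t\<in>{0..\<eta> m}. \<alpha> t = holdT T m (R m) t"
    using alpha_phase[of m] assms unfolding prv_def by auto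
  moreover have "continuous_on {0..\<eta> m} (holdT T m (R m)) \<and> anti_on {0..\<eta> m} (holdT T m (R m))"
    by (rule hold_piece) (use assms a eta_bnd[of m] in auto)
  ultimately show ?case using piece[of 0 "\<eta> m" \<alpha> "holdT T m (R m)"] by simp
next
  case (Suc d)
  define j where "j = m - Suc d"
  have j: "1 \<le> j" "j < m" "m - d = Suc j" using Suc.prems unfolding j_def by auto
  have ih: "continuous_on {0..\<eta> (Suc j)} \<alpha> \<and> anti_on {0..\<eta> (Suc j)} \<alpha>" using Suc j by simp
  have "\<forall>t\<in>{\<eta> (Suc j)..\<eta> j}. \<alpha> t = holdT T j (R j) t"
    using alpha_phase[of j] j unfolding prv_def by auto
  moreover have "continuous_on {\<eta> (Suc j)..\<eta> j} (holdT T j (R j)) \<and> anti_on {\<eta> (Suc j)..\<eta> j} (holdT T j (R j))"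
    by (rule hold_piece) (use j R_bnd[of j] eta_bnd[of j] eta_bnd[of "Suc j"] in auto)
  ultimately have p2: "continuous_on {\<eta> (Suc j)..\<eta> j} \<alpha> \<and> anti_on {\<eta> (Suc j)..\<eta> j} \<alpha>"
    using piece[of "\<eta> (Suc j)" "\<eta> j" \<alpha> "holdT T j (R j)"] by simp
  have "continuous_on {0..\<eta> j} \<alpha> \<and> anti_on {0..\<eta> j} \<alpha>"
    using glue[of 0 "\<eta> (Suc j)" "\<eta> j" \<alpha>] ih p2 eta_bnd[of "Suc j"] ord j by auto
  then show ?case unfolding j_def by simp
qed

lemma alpha_props:
  shows "continuous_on {0..1} \<alpha>" "\<forall>s t. 0 \<le> s \<and> s \<le> t \<and> t \<le> 1 \<longrightarrow> \<alpha> t \<le> \<alpha> s"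
    "\<forall>t\<in>{0..1}. 0 \<le> \<alpha> t" "\<alpha> 0 = a"
proof -
  have ca: "continuous_on {0..1} \<alpha> \<and> anti_on {0..1} \<alpha>"
  proof (cases "m = 0")
    case True
    then have "\<alpha> = (\<lambda>t. a)" unfolding alphaT_def by (auto simp: fun_eq_iff)
    then show ?thesis by (simp add: anti_on_def continuous_on_const)
  next
    case False
    then have m1: "1 \<le> m" by simp
    have g1: "continuous_on {0..\<eta> 1} \<alpha> \<and> anti_on {0..\<eta> 1} \<alpha>"
      using alpha_glue[OF m1, of "m - 1"] m1 by simp
    have "\<forall>t\<in>{\<eta> 1..1}. \<alpha> t = (\<lambda>_. R 0) t" using alpha_tail[OF m1] by auto
    then have g2: "continuous_on {\<eta> 1..1} \<alpha> \<and> anti_on {\<eta> 1..1} \<alpha>"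
      using piece[of "\<eta> 1" 1 \<alpha> "\<lambda>_. R 0"] by (simp add: anti_on_def continuous_on_const)
    show ?thesis using glue[of 0 "\<eta> 1" 1 \<alpha>] g1 g2 eta_bnd[of 1] m1 by auto
  qed
  show "continuous_on {0..1} \<alpha>" using ca by simp
  show anti: "\<forall>s t. 0 \<le> s \<and> s \<le> t \<and> t \<le> 1 \<longrightarrow> \<alpha> t \<le> \<alpha> s" using ca unfolding anti_on_def by auto
  show a0: "\<alpha> 0 = a"
  proof (cases "m = 0")
    case True then show ?thesis unfolding alphaT_def by simp
  next
    case False
    then show ?thesis using alpha_phase[of m 0] eta_bnd[of m] hold_eq_c[OF T _ less_imp_le[OF a], of m 0]
        T_pos[OF T _ less_imp_le[OF a], of m] unfolding prv_def by simp
  qed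
  have "0 \<le> \<alpha> 1"
  proof (cases "m = 0")
    case True then show ?thesis using a unfolding alphaT_def by simp
  next
    case False
    then show ?thesis using alpha_tail[of 1] eta_bnd[of 1] R_bnd[of 0] by simp
  qed
  then show "\<forall>t\<in>{0..1}. 0 \<le> \<alpha> t" using anti by force
qed

lemma C2_top: "C2 m \<alpha> 0 \<eta>"
  unfolding C2_def
proof (intro conjI)
  show "continuous_on {0..1} \<alpha>" "\<forall>s t. 0 \<le> s \<and> s \<le> t \<and> t \<le> 1 \<longrightarrow> \<alpha> t \<le> \<alpha> s"
    "\<forall>t\<in>{0..1}. 0 \<le> \<alpha> t" using alpha_props by auto
  show "\<alpha> 0 \<le> a" using alpha_props(4) by simp
  show "(0::real) \<le> 0" by simp
  show "\<forall>t\<in>{0..0}. \<alpha> t = \<alpha> 0" by simp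
  show "1 \<le> m \<longrightarrow> 0 \<le> T m (\<alpha> 0) \<and> 0 \<le> \<eta> m \<and> \<eta> 1 \<le> 1"
    using T_pos[OF T _ less_imp_le[OF a], of m] alpha_props(4) eta_bnd[of m] eta_bnd[of 1] by auto
  show "\<forall>j. 1 \<le> j \<and> j < m \<longrightarrow> \<eta> (Suc j) \<le> \<eta> j" using ord .
  show "\<forall>j. 1 \<le> j \<and> j \<le> m \<longrightarrow> (\<forall>t. (if j = m then 0 else \<eta> (Suc j)) \<le> t \<and> t \<le> \<eta> j
            \<longrightarrow> \<alpha> t = holdT T j (\<alpha> (if j = m then 0 else \<eta> (Suc j))) t)"
  proof (intro allI impI)
    fix j t assume j: "1 \<le> j \<and> j \<le> m" and t: "(if j = m then 0 else \<eta> (Suc j)) \<le> t \<and> t \<le> \<eta> j"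
    have pj: "(if j = m then 0 else \<eta> (Suc j)) = prv j" unfolding prv_def by simp
    show "\<alpha> t = holdT T j (\<alpha> (if j = m then 0 else \<eta> (Suc j))) t"
      unfolding pj using alpha_phase[of j t] alpha_prv[of j] j t pj by simp
  qed
qed

end

lemma Vval: "V m a = (A1 + A2) * (\<Prod>i=1..m. (1 - P2 (T i a))) - A2"
proof (cases "m = 0")
  case True then show ?thesis using a by (simp add: V0)
next
  case False
  then have h: "E m a = 1 - (\<Prod>i=1..m. (1 - P2 (T i a)))" using hypE[OF a, of m] unfolding Pr_def by simp
  show ?thesis unfolding V_def W_def h using False by (simp add: algebra_simps)
qed

lemma C1_top: assumes "consumption_fun a \<gamma>" shows "C1 m \<gamma> 0 (etaT T \<gamma> m)"
  unfolding C1_def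
proof (intro conjI)
  show "continuous_on {0..1} \<gamma>" "\<forall>s t. 0 \<le> s \<and> s \<le> t \<and> t \<le> 1 \<longrightarrow> \<gamma> t \<le> \<gamma> s"
    "\<forall>t\<in>{0..1}. 0 \<le> \<gamma> t" using assms unfolding consumption_fun_def by auto
  show "\<gamma> 0 \<le> a" using assms unfolding consumption_fun_def by auto
  show "(0::real) \<le> 0" "(0::real) \<le> 1" by auto
  show "\<forall>t\<in>{0..0}. \<gamma> t = \<gamma> 0" by simp
  show "1 \<le> m \<longrightarrow> 0 \<le> T m (\<gamma> 0) \<and> etaT T \<gamma> m m = actT T \<gamma> m 0"
    using T_pos[OF T _ less_imp_le[OF a], of m] assms unfolding consumption_fun_def etaT_def by auto
  show "\<forall>j. 1 \<le> j \<and> j < m \<longrightarrow> etaT T \<gamma> m j = actT T \<gamma> j (etaT T \<gamma> m (Suc j))"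
  proof (intro allI impI)
    fix j assume j: "1 \<le> j \<and> j < m"
    have "Suc m - j = Suc (m - j)" "m - (m - j) = j" "Suc m - Suc j = m - j" using j by auto
    then show "etaT T \<gamma> m j = actT T \<gamma> j (etaT T \<gamma> m (Suc j))" unfolding etaT_def by simp
  qed
qed

end

theorem theorem2:
  fixes P1 P2 :: "real \<Rightarrow> real" and A1 A2 a :: real and m :: nat
    and T :: "nat \<Rightarrow> real \<Rightarrow> real"
  assumes "effectiveness P1" and "effectiveness P2"
    and "0 < A1" and "0 < A2" and "0 < a"
    and "classT T"
    and hyp: "\<forall>x\<in>{0<..a}. \<forall>k\<in>{1..m}.
           exp (integral {0..x} (\<lambda>y. ln (1 - P1 (T k y))))
           + (\<Prod>i=1..k. (1 - P2 (T i x))) = 1"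
  shows "(\<forall>\<alpha>. consumption_fun a \<alpha> \<longrightarrow>
            Kpay P1 P2 A1 A2 \<alpha> (etaT T \<alpha> m) m
              \<le> (A1 + A2) * (\<Prod>i=1..m. (1 - P2 (T i a))) - A2)
       \<and> (\<forall>\<eta>. action_moments m \<eta> \<longrightarrow>
            (A1 + A2) * (\<Prod>i=1..m. (1 - P2 (T i a))) - A2
              \<le> Kpay P1 P2 A1 A2 (alphaT T \<eta> m a) \<eta> m)
       \<and> (0 < m \<longrightarrow>
            A1 - (A1 + A2) * exp (integral {0..a} (\<lambda>y. ln (1 - P1 (T m y))))
              = (A1 + A2) * (\<Prod>i=1..m. (1 - P2 (T i a))) - A2)"
proof -
  interpret G: game P1 P2 A1 A2 a m T
    by unfold_locales (use assms in auto)
  show ?thesis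
  proof (intro conjI allI impI)
    fix \<gamma> assume c: "consumption_fun a \<gamma>"
    have "Kpay P1 P2 A1 A2 \<gamma> (etaT T \<gamma> m) m \<le> G.V m (\<gamma> 0)"
      using G.L1[OF le_refl G.C1_top[OF c]] .
    moreover have "\<gamma> 0 = a" using c unfolding consumption_fun_def by simp
    ultimately show "Kpay P1 P2 A1 A2 \<gamma> (etaT T \<gamma> m) m
              \<le> (A1 + A2) * (\<Prod>i=1..m. (1 - P2 (T i a))) - A2" using G.Vval by simp
  next
    fix \<eta> assume e: "action_moments m \<eta>"
    have "G.V m (alphaT T \<eta> m a 0) \<le> Kpay P1 P2 A1 A2 (alphaT T \<eta> m a) \<eta> m"
      using G.L2[OF le_refl G.C2_top[OF e]] .
    then show "(A1 + A2) * (\<Prod>i=1..m. (1 - P2 (T i a))) - A2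
              \<le> Kpay P1 P2 A1 A2 (alphaT T \<eta> m a) \<eta> m"
      using G.Vval G.alpha_props(4)[OF e] by simp
  next
    assume m: "0 < m"
    have h: "exp (integral {0..a} (\<lambda>y. ln (1 - P1 (T m y)))) = 1 - (\<Prod>i=1..m. (1 - P2 (T i a)))"
      using hyp assms(5) m by (auto simp: eq_diff_eq)
    show "A1 - (A1 + A2) * exp (integral {0..a} (\<lambda>y. ln (1 - P1 (T m y))))
              = (A1 + A2) * (\<Prod>i=1..m. (1 - P2 (T i a))) - A2"
      unfolding h by (simp add: algebra_simps)
  qed
qed

end
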